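(* Let $r>0$ and let $L$ range over those integers for which $N=rL$ is an integer. Let $\nu_L$ be the (unique) stationary distribution of the RBB process with $L$ bins and $N=rL$ balls, and let $\eta^L\sim\nu_L$. Assume that $(\nu_L)$ is chaotic, i.e. there is a probability measure $\mu$ on $\mathbb{Z}_+$ such that for every $n\in\mathbb{N}$ the law of $(\eta^L_1,\dots,\eta^L_n)$ converges weakly to $\mu^{\otimes n}$ as $L\to\infty$. Then $\mu=\pi_{\rho_r}$, where $\rho_r=1+r-\sqrt{1+r^2}$.
   Context: RBB process with $L$ bins: Markov chain on $\mathbb{Z}_+^L$; with $w(\eta):=(\mathbf{1}(\eta_1>0),\dots,\mathbf{1}(\eta_L>0))$ and $K(\eta):=\sum_j\mathbf{1}(\eta_j>0)$, from state $\eta$ the next state is $\eta-w(\eta)+B(\eta)$ where $B(\eta)$ is multinomial with $K(\eta)$ trials and cell probabilities $(1/L,\dots,1/L)$. It conserves the total number of balls and, restricted to configurations with $N$ balls, is an ergodic finite Markov chain. The M/D/1 queue with arrival rate $\rho\ge0$ is the Markov chain on $\mathbb{Z}_+$ given by $\zeta(t+1):=\zeta(t)-\mathbf{1}(\zeta(t)>0)+M_{t+1}$ with $(M_t)_{t\ge1}$ i.i.d. Poisson of mean $\rho$; for $\rho\in[0,1)$, $\pi_\rho$ denotes its invariant probability measure. *)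

theory Defs
  imports "HOL-Probability.Probability"
begin

text \<open>Configurations of the RBB process with L bins are lists of naturals of length L
  (bin j of the paper is list index j-1).\<close>

definition occupied :: "nat list \<Rightarrow> nat list" where
  "occupied \<eta> = map (\<lambda>x. if 0 < x then 1 else 0) \<eta>"

definition num_occupied :: "nat list \<Rightarrow> nat" where
  "num_occupied \<eta> = length (filter (\<lambda>x. 0 < x) \<eta>)"

definition multinomial_uniform :: "nat \<Rightarrow> nat \<Rightarrow> nat list pmf" where
  "multinomial_uniform L k =
     map_pmf (\<lambda>bs. map (\<lambda>j. count_list bs j) [0..<L]) (replicate_pmf k (pmf_of_set {..<L}))"

definition rbb_step :: "nat \<Rightarrow> nat list \<Rightarrow> nat list pmf" where
  "rbb_step L \<eta> =
     map_pmf (\<lambda>b. map (\<lambda>(x, w, y). x - w + y) (zip \<eta> (zip (occupied \<eta>) b)))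
             (multinomial_uniform L (num_occupied \<eta>))"

definition rbb_configs :: "nat \<Rightarrow> nat \<Rightarrow> nat list set" where
  "rbb_configs L N = {\<eta>. length \<eta> = L \<and> sum_list \<eta> = N}"

definition rbb_stationary :: "nat \<Rightarrow> nat \<Rightarrow> nat list pmf \<Rightarrow> bool" where
  "rbb_stationary L N p \<longleftrightarrow> set_pmf p \<subseteq> rbb_configs L N \<and> bind_pmf p (rbb_step L) = p"

definition poisson_arrivals :: "real \<Rightarrow> nat pmf" where
  "poisson_arrivals \<rho> = (if \<rho> = 0 then return_pmf 0 else poisson_pmf \<rho>)"

definition md1_step :: "real \<Rightarrow> nat \<Rightarrow> nat pmf" where
  "md1_step \<rho> z = map_pmf (\<lambda>m. z - (if 0 < z then 1 else 0) + m) (poisson_arrivals \<rho>)"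

definition md1_invariant :: "real \<Rightarrow> nat pmf \<Rightarrow> bool" where
  "md1_invariant \<rho> p \<longleftrightarrow> bind_pmf p (md1_step \<rho>) = p"

text \<open>\<pi>_\<rho>: the invariant probability measure of the M/D/1 queue (\<rho> \<in> [0,1)).\<close>
definition md1_pi :: "real \<Rightarrow> nat pmf" where
  "md1_pi \<rho> = (THE p. md1_invariant \<rho> p)"

end

theory Submission
  imports Defs
begin


lemma expectation_bind_pmf_bounded:
  fixes f :: "'b \<Rightarrow> real"
  assumes "\<And>y. \<bar>f y\<bar> \<le> B"
  shows "measure_pmf.expectation (bind_pmf M N) f =
         measure_pmf.expectation M (\<lambda>x. measure_pmf.expectation (N x) f)"
  unfolding measure_pmf_bind
  by (rule integral_bind[where K="count_space UNIV" and B=B and B'=1])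
     (auto simp: assms measure_pmf.subprob_space_axioms measure_pmf.emeasure_space_1
           intro!: measure_pmf_in_subprob_algebra finite_measure.intro)

lemma pmf_expectation_sums:
  fixes p :: "nat pmf" and f :: "nat \<Rightarrow> real"
  assumes B: "\<And>n. \<bar>f n\<bar> \<le> B"
  shows "(\<lambda>n. pmf p n * f n) sums measure_pmf.expectation p f"
proof -
  have "measure_pmf.expectation p f = integral\<^sup>L (count_space UNIV) (\<lambda>n. pmf p n * f n)"
    unfolding measure_pmf_eq_density
    by (subst integral_density) (auto simp: pmf_nonneg)
  moreover have "integrable (count_space UNIV) (\<lambda>n. pmf p n * f n)"
  proof (rule Bochner_Integration.integrable_bound)
    show "integrable (count_space UNIV) (\<lambda>n. pmf p n * B)"
      using integrable_pmf[of UNIV p] by simp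
    show "AE n in count_space UNIV. norm (pmf p n * f n) \<le> norm (pmf p n * B)"
      using B by (auto simp: abs_mult pmf_nonneg intro!: mult_left_mono order.trans[OF _ abs_ge_self])
  qed auto
  ultimately show ?thesis using sums_integral_count_space_nat by metis
qed



lemma bounded_powser:
  fixes c :: "nat \<Rightarrow> real"
  assumes B: "\<And>n. \<bar>c n\<bar> \<le> B" and z: "0 \<le> z" "z < 1"
  shows "summable (\<lambda>k. c k * z^k)" "\<bar>\<Sum>k. c k * z^k\<bar> \<le> B / (1 - z)"
proof -
  have g: "summable (\<lambda>k. B * z^k)" using z by (intro summable_mult summable_geometric) auto
  have le: "norm (c k * z^k) \<le> B * z^k" for k
    using B[of k] z by (auto simp: abs_mult intro!: mult_right_mono)
  show s: "summable (\<lambda>k. c k * z^k)"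
    by (rule summable_comparison_test[OF _ g]) (use le in auto)
  have sn: "summable (\<lambda>k. norm (c k * z^k))"
    by (rule summable_comparison_test[OF _ g]) (use le in auto)
  have "\<bar>\<Sum>k. c k * z^k\<bar> \<le> (\<Sum>k. norm (c k * z^k))"
    using summable_norm[OF sn] by simp
  also have "\<dots> \<le> (\<Sum>k. B * z^k)"
    by (rule suminf_le) (use le g sn in auto)
  also have "\<dots> = B / (1 - z)"
    using z by (simp add: suminf_mult suminf_geometric divide_simps)
  finally show "\<bar>\<Sum>k. c k * z^k\<bar> \<le> B / (1 - z)" .
qed

lemma powser_zero_coeff:
  fixes c :: "nat \<Rightarrow> real"
  assumes B: "\<And>n. \<bar>c n\<bar> \<le> B"
    and Z: "\<And>z. 0 < z \<Longrightarrow> z < 1 \<Longrightarrow> (\<Sum>n. c n * z^n) = 0"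
  shows "c n = 0"
proof (induction n rule: less_induct)
  case (less n)
  have B0: "0 \<le> B" using B[of 0] by linarith
  have key: "\<bar>c n\<bar> \<le> z * (B / (1 - z))" if z: "0 < z" "z < 1" for z
  proof -
    have s: "summable (\<lambda>k. c k * z^k)" using bounded_powser[OF B, of z] z by auto
    have "(\<lambda>k. c (k + n) * z^(k+n)) sums (\<Sum>k. c k * z^k)"
    proof -
      have "(\<lambda>k. c k * z^k) sums (\<Sum>k. c k * z^k)" using s by (rule summable_sums)
      moreover have "\<And>i. i < n \<Longrightarrow> c i * z^i = 0" using less by auto
      ultimately show ?thesis using sums_zero_iff_shift[of n "\<lambda>k. c k * z^k"] by simp
    qed
    hence "(\<lambda>k. c (k + n) * z^(k+n)) sums 0" using Z[OF z] by simp
    hence "(\<lambda>k. z^n * (c (k + n) * z^k)) sums 0" by (simp add: power_add algebra_simps)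
    hence "(\<lambda>k. c (k + n) * z^k) sums 0"
      using z sums_mult[of "\<lambda>k. z^n * (c (k + n) * z^k)" 0 "1 / z^n"] by (simp add: field_simps)
    hence "(\<lambda>k. c (Suc k + n) * z^(Suc k)) sums (0 - c (0 + n) * z^0)"
      by (subst sums_Suc_iff) simp
    hence "(\<lambda>k. z * (c (Suc k + n) * z^k)) sums (- c n)" by (simp add: algebra_simps)
    hence "(\<lambda>k. c (Suc k + n) * z^k) sums (- c n / z)"
      using z sums_mult[of "\<lambda>k. z * (c (Suc k + n) * z^k)" "- c n" "1 / z"] by (simp add: field_simps)
    hence eq: "(\<Sum>k. c (Suc k + n) * z^k) = - c n / z" by (rule sums_unique[symmetric])
    have "\<bar>\<Sum>k. c (Suc k + n) * z^k\<bar> \<le> B / (1 - z)"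
      using bounded_powser(2)[of "\<lambda>k. c (Suc k + n)" B z] B z by auto
    hence "\<bar>c n\<bar> / z \<le> B / (1 - z)" using eq z by simp
    thus ?thesis using z by (simp add: field_simps)
  qed
  show ?case
  proof (rule ccontr)
    assume ne: "c n \<noteq> 0"
    define z where "z = \<bar>c n\<bar> / (4 * B + 4)"
    have z0: "0 < z" using ne B0 by (simp add: z_def)
    have z1: "z \<le> 1/4" using B[of n] B0 by (simp add: z_def field_simps)
    have "\<bar>c n\<bar> \<le> z * (B / (1 - z))" using key[of z] z0 z1 by auto
    also have "\<dots> \<le> z * (2 * B)"
    proof -
      have "B * (1 - 2*z) \<ge> 0" using z1 B0 by simp
      hence "B / (1 - z) \<le> 2 * B" using z1 by (simp add: field_simps)
      thus ?thesis using z0 by (intro mult_left_mono) auto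
    qed
    also have "\<dots> = \<bar>c n\<bar> * (2 * B) / (4 * B + 4)" by (simp add: z_def)
    also have "\<dots> < \<bar>c n\<bar>"
    proof -
      have "0 < \<bar>c n\<bar>" using ne by simp
      hence "\<bar>c n\<bar> * (2 * B) < \<bar>c n\<bar> * (4 * B + 4)" using B0 by (intro mult_strict_left_mono) auto
      thus ?thesis using B0 by (simp add: field_simps)
    qed
    finally show False by simp
  qed
qed



lemma pgf_sums:
  fixes p :: "nat pmf" assumes "0 \<le> z" "z \<le> 1"
  shows "(\<lambda>n. pmf p n * z^n) sums measure_pmf.expectation p (\<lambda>n. z^n)"
  by (rule pmf_expectation_sums[where B=1]) (use assms in \<open>auto intro: power_le_one\<close>)

lemma pmf_sums_one: "(\<lambda>n. pmf p n) sums (1::real)" for p :: "nat pmf"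
  using pmf_expectation_sums[of "\<lambda>_. 1::real" 1 p] by simp

lemma pgf_scaled_eq:
  fixes p q :: "nat pmf" and a b :: real
  assumes "\<And>z. 0 < z \<Longrightarrow> z < 1 \<Longrightarrow>
     a * measure_pmf.expectation p (\<lambda>n. z^n) = b * measure_pmf.expectation q (\<lambda>n. z^n)"
  shows "a * pmf p n = b * pmf q n"
proof -
  let ?c = "\<lambda>n. a * pmf p n - b * pmf q n"
  have "?c n = 0"
  proof (rule powser_zero_coeff[where B="\<bar>a\<bar> + \<bar>b\<bar>"])
    fix n
    have "\<bar>?c n\<bar> \<le> \<bar>a\<bar> * pmf p n + \<bar>b\<bar> * pmf q n"
      by (auto simp: abs_mult intro!: order.trans[OF abs_triangle_ineq4])
    also have "\<dots> \<le> \<bar>a\<bar> + \<bar>b\<bar>"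
      by (intro add_mono mult_left_le) (auto simp: pmf_le_1)
    finally show "\<bar>?c n\<bar> \<le> \<bar>a\<bar> + \<bar>b\<bar>" .
  next
    fix z :: real assume z: "0 < z" "z < 1"
    have "(\<lambda>n. a * (pmf p n * z^n) - b * (pmf q n * z^n)) sums
       (a * measure_pmf.expectation p (\<lambda>n. z^n) - b * measure_pmf.expectation q (\<lambda>n. z^n))"
      using z by (intro sums_diff sums_mult pgf_sums) auto
    hence "(\<lambda>n. ?c n * z^n) sums 0" using assms[OF z] by (simp add: algebra_simps)
    thus "(\<Sum>n. ?c n * z^n) = 0" by (rule sums_unique[symmetric])
  qed
  thus ?thesis by simp
qed

lemma pmf_eq_pgf:
  fixes p q :: "nat pmf"
  assumes "\<And>z::real. 0 < z \<Longrightarrow> z < 1 \<Longrightarrow>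
     measure_pmf.expectation p (\<lambda>n. z^n) = measure_pmf.expectation q (\<lambda>n. z^n)"
  shows "p = q"
proof (rule pmf_eqI)
  fix i
  have h: "1 * measure_pmf.expectation p (\<lambda>n. z^n) = 1 * measure_pmf.expectation q (\<lambda>n. z^n)"
    if "0 < z" "z < 1" for z :: real
    using assms[OF that] by (simp only: mult_1_left)
  have "1 * pmf p i = 1 * pmf q i" by (rule pgf_scaled_eq[OF h])
  thus "pmf p i = pmf q i" by simp
qed

lemma poisson_pgf:
  assumes "0 \<le> \<rho>" "0 \<le> z" "z \<le> 1"
  shows "measure_pmf.expectation (poisson_arrivals \<rho>) (\<lambda>n. z^n) = exp (\<rho> * (z - 1))"
proof (cases "\<rho> = 0")
  case True thus ?thesis by (simp add: poisson_arrivals_def)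
next
  case False
  hence r: "0 < \<rho>" using assms by auto
  have "(\<lambda>n. pmf (poisson_pmf \<rho>) n * z^n) sums measure_pmf.expectation (poisson_pmf \<rho>) (\<lambda>n. z^n)"
    using assms by (intro pgf_sums) auto
  moreover have "(\<lambda>n. pmf (poisson_pmf \<rho>) n * z^n) = (\<lambda>n. exp (-\<rho>) * ((\<rho> * z)^n /\<^sub>R fact n))"
    using r by (auto simp: power_mult_distrib field_simps)
  moreover have "(\<lambda>n. exp (-\<rho>) * ((\<rho> * z)^n /\<^sub>R fact n)) sums (exp (-\<rho>) * exp (\<rho> * z))"
    by (intro sums_mult exp_converges)
  ultimately have "measure_pmf.expectation (poisson_pmf \<rho>) (\<lambda>n. z^n) = exp (-\<rho>) * exp (\<rho> * z)"
    using sums_unique2 by metis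
  moreover have "exp (-\<rho>) * exp (\<rho> * z) = exp (\<rho> * (z - 1))"
    by (simp add: exp_add[symmetric] algebra_simps)
  ultimately show ?thesis using False by (simp add: poisson_arrivals_def)
qed

definition wz :: "nat \<Rightarrow> nat" where "wz y = (if 0 < y then 1 else 0)"

lemma md1_bind_pgf:
  assumes "0 \<le> \<rho>" "0 \<le> z" "z \<le> 1"
  shows "measure_pmf.expectation (bind_pmf p (md1_step \<rho>)) (\<lambda>n. z^n) =
         measure_pmf.expectation p (\<lambda>y. z^(y - wz y)) * exp (\<rho> * (z - 1))"
proof -
  have b: "\<bar>z^n\<bar> \<le> 1" for n using assms by (auto intro: power_le_one)
  have "measure_pmf.expectation (bind_pmf p (md1_step \<rho>)) (\<lambda>n. z^n) =
        measure_pmf.expectation p (\<lambda>y. measure_pmf.expectation (md1_step \<rho> y) (\<lambda>n. z^n))"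
    by (rule expectation_bind_pmf_bounded[where B=1]) (use b in auto)
  also have "\<dots> = measure_pmf.expectation p (\<lambda>y. z^(y - wz y) * exp (\<rho> * (z - 1)))"
  proof (rule Bochner_Integration.integral_cong[OF refl])
    fix y
    have e: "y - (if 0 < y then 1 else 0) = y - wz y" by (simp add: wz_def)
    have "measure_pmf.expectation (md1_step \<rho> y) (\<lambda>n. z^n) =
          measure_pmf.expectation (poisson_arrivals \<rho>) (\<lambda>m. z^(y - wz y) * z^m)"
      unfolding md1_step_def integral_map_pmf e by (simp only: power_add)
    also have "\<dots> = z^(y - wz y) * exp (\<rho> * (z - 1))"
      using poisson_pgf[OF assms] by simp
    finally show "measure_pmf.expectation (md1_step \<rho> y) (\<lambda>n. z^n) = z^(y - wz y) * exp (\<rho> * (z - 1))" .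
  qed
  also have "\<dots> = measure_pmf.expectation p (\<lambda>y. z^(y - wz y)) * exp (\<rho> * (z - 1))"
    by simp
  finally show ?thesis .
qed

lemma integrable_pmf_bounded:
  fixes f :: "'a \<Rightarrow> real"
  assumes "\<And>x. \<bar>f x\<bar> \<le> B"
  shows "integrable (measure_pmf p) f"
  by (rule measure_pmf.integrable_const_bound[where B=B]) (use assms in auto)

lemma md1_invariant_pgf:
  assumes inv: "md1_invariant \<rho> p" and r: "0 \<le> \<rho>" "\<rho> < 1" and z: "0 < z" "z < 1"
  shows "measure_pmf.expectation p (\<lambda>n. z^n) * (exp (\<rho> * (z - 1)) - z) =
         pmf p 0 * (1 - z) * exp (\<rho> * (z - 1))"
proof -
  let ?G = "measure_pmf.expectation p (\<lambda>n. z^n)"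
  let ?H = "measure_pmf.expectation p (\<lambda>y. z^(y - wz y))"
  let ?E = "exp (\<rho> * (z - 1))"
  have G: "?G = ?H * ?E" using md1_bind_pgf[OF r(1), of z p] inv z by (simp add: md1_invariant_def)
  have b: "\<bar>z^n\<bar> \<le> 1" for n using z by (simp add: power_le_one)
  have fin1: "integrable (measure_pmf p) (\<lambda>n. z^n)"
    by (rule integrable_pmf_bounded[where B=1]) (rule b)
  have fin2: "integrable (measure_pmf p) (\<lambda>y. (z - 1) * indicator {0} y :: real)"
    by (rule integrable_pmf_bounded[where B=1]) (use z in \<open>auto split: split_indicator\<close>)
  have pt: "z * z^(y - wz y) = z^y + (z - 1) * indicator {0} y" for y
  proof (cases "y = 0")
    case False
    then obtain k where "y = Suc k" by (cases y) auto
    thus ?thesis by (simp add: wz_def)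
  qed (simp add: wz_def)
  have "z * ?H = measure_pmf.expectation p (\<lambda>y. z * z^(y - wz y))" by simp
  also have "\<dots> = measure_pmf.expectation p (\<lambda>y. z^y + (z - 1) * indicator {0} y)"
    by (simp only: pt)
  also have "\<dots> = ?G + measure_pmf.expectation p (\<lambda>y. (z - 1) * indicator {0} y)"
    by (rule Bochner_Integration.integral_add[OF fin1 fin2])
  also have "measure_pmf.expectation p (\<lambda>y. (z - 1) * indicator {0} y) = (z - 1) * pmf p 0"
    by (simp add: measure_pmf_single)
  finally have zH: "z * ?H = ?G + (z - 1) * pmf p 0" .
  have "z * ?G = (z * ?H) * ?E" unfolding G by simp
  also have "\<dots> = (?G + (z - 1) * pmf p 0) * ?E" unfolding zH ..
  finally have "z * ?G = (?G + (z - 1) * pmf p 0) * ?E" .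
  thus ?thesis by (simp add: algebra_simps)
qed

lemma md1_E_gt:
  fixes \<rho> z :: real
  assumes "0 \<le> \<rho>" "\<rho> < 1" "0 < z" "z < 1"
  shows "z < exp (\<rho> * (z - 1))"
proof -
  have "1 + \<rho> * (z - 1) \<le> exp (\<rho> * (z - 1))" using exp_ge_add_one_self[of "\<rho> * (z - 1)"] by linarith
  moreover have "z < 1 + \<rho> * (z - 1)"
  proof -
    have "0 < (1 - z) * (1 - \<rho>)" using assms by simp
    thus ?thesis by (simp add: algebra_simps)
  qed
  ultimately show ?thesis by linarith
qed

lemma md1_invariant_unique:
  assumes p: "md1_invariant \<rho> p" and q: "md1_invariant \<rho> q" and r: "0 \<le> \<rho>" "\<rho> < 1"
  shows "p = q"
proof -
  have sc: "pmf q 0 * pmf p n = pmf p 0 * pmf q n" for n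
  proof (rule pgf_scaled_eq)
    fix z :: real assume z: "0 < z" "z < 1"
    let ?E = "exp (\<rho> * (z - 1))"
    have d: "?E - z \<noteq> 0" using md1_E_gt[OF r z] by simp
    have "pmf q 0 * measure_pmf.expectation p (\<lambda>n. z^n) * (?E - z) =
          pmf q 0 * (measure_pmf.expectation p (\<lambda>n. z^n) * (?E - z))" by simp
    also have "\<dots> = pmf q 0 * (pmf p 0 * (1 - z) * ?E)" using md1_invariant_pgf[OF p r z] by simp
    also have "\<dots> = pmf p 0 * (pmf q 0 * (1 - z) * ?E)" by simp
    also have "\<dots> = pmf p 0 * (measure_pmf.expectation q (\<lambda>n. z^n) * (?E - z))"
      using md1_invariant_pgf[OF q r z] by simp
    finally have "pmf q 0 * measure_pmf.expectation p (\<lambda>n. z^n) * (?E - z) =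
          pmf p 0 * measure_pmf.expectation q (\<lambda>n. z^n) * (?E - z)" by simp
    thus "pmf q 0 * measure_pmf.expectation p (\<lambda>n. z^n) = pmf p 0 * measure_pmf.expectation q (\<lambda>n. z^n)"
      using d by simp
  qed
  have "(\<lambda>n. pmf q 0 * pmf p n) sums (pmf q 0 * 1)" by (intro sums_mult pmf_sums_one)
  moreover have "(\<lambda>n. pmf p 0 * pmf q n) sums (pmf p 0 * 1)" by (intro sums_mult pmf_sums_one)
  ultimately have eq0: "pmf q 0 = pmf p 0" using sc sums_unique2 by fastforce
  show ?thesis
  proof (cases "pmf p 0 = 0")
    case False
    thus ?thesis using sc eq0 by (intro pmf_eqI) simp
  next
    case True
    have "1 * pmf p n = 0 * pmf p n" for n
    proof (rule pgf_scaled_eq)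
      fix z :: real assume z: "0 < z" "z < 1"
      have d: "exp (\<rho> * (z - 1)) - z \<noteq> 0" using md1_E_gt[OF r z] by simp
      show "1 * measure_pmf.expectation p (\<lambda>n. z^n) = 0 * measure_pmf.expectation p (\<lambda>n. z^n)"
        using md1_invariant_pgf[OF p r z] True d by simp
    qed
    hence "(\<lambda>n. pmf p n) = (\<lambda>_. 0)" by auto
    thus ?thesis using pmf_sums_one[of p] sums_unique2 by fastforce
  qed
qed



definition cnt :: "nat \<Rightarrow> nat list \<Rightarrow> nat list" where
  "cnt L bs = map (\<lambda>j. count_list bs j) [0..<L]"

definition rbb_next :: "nat list \<Rightarrow> nat list \<Rightarrow> nat list" where
  "rbb_next \<eta> b = map (\<lambda>(x, w, y). x - w + y) (zip \<eta> (zip (occupied \<eta>) b))"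

definition unif :: "nat \<Rightarrow> nat pmf" where "unif L = pmf_of_set {..<L}"

lemma multinomial_cnt: "multinomial_uniform L k = map_pmf (cnt L) (replicate_pmf k (unif L))"
  by (simp add: multinomial_uniform_def cnt_def[abs_def] unif_def)

lemma rbb_step_alt: "rbb_step L \<eta> = map_pmf (\<lambda>bs. rbb_next \<eta> (cnt L bs)) (replicate_pmf (num_occupied \<eta>) (unif L))"
  by (simp add: rbb_step_def rbb_next_def multinomial_cnt pmf.map_comp o_def)

lemma set_unif: "0 < L \<Longrightarrow> set_pmf (unif L) = {..<L}"
  unfolding unif_def by (rule set_pmf_of_set) auto

lemma length_cnt[simp]: "length (cnt L bs) = L" by (simp add: cnt_def)
lemma nth_cnt[simp]: "i < L \<Longrightarrow> cnt L bs ! i = count_list bs i" by (simp add: cnt_def)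

lemma length_rbb_next[simp]: "length b = length \<eta> \<Longrightarrow> length (rbb_next \<eta> b) = length \<eta>"
  by (simp add: rbb_next_def occupied_def)

lemma nth_rbb_next:
  "length b = length \<eta> \<Longrightarrow> i < length \<eta> \<Longrightarrow>
   rbb_next \<eta> b ! i = \<eta> ! i - wz (\<eta> ! i) + b ! i"
  by (simp add: rbb_next_def occupied_def wz_def)

lemma num_occupied_sum: "num_occupied \<eta> = (\<Sum>i<length \<eta>. wz (\<eta> ! i))"
proof -
  have "num_occupied \<eta> = card {i. i < length \<eta> \<and> 0 < \<eta> ! i}"
    by (simp add: num_occupied_def length_filter_conv_card)
  also have "\<dots> = (\<Sum>i<length \<eta>. wz (\<eta> ! i))"
    by (simp add: wz_def sum.If_cases lessThan_def Collect_conj_eq)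
  finally show ?thesis .
qed

lemma sum_list_nth: "sum_list xs = (\<Sum>i<length xs. xs ! i)" for xs :: "nat list"
  by (simp add: sum_list_sum_nth atLeast0LessThan)

lemma sum_cnt: "set bs \<subseteq> {..<L} \<Longrightarrow> sum_list (cnt L bs) = length bs"
  using sum_count_set[of bs "{..<L}"] by (simp add: sum_list_nth)

lemma wz_le: "wz x \<le> x" by (simp add: wz_def)

lemma sum_rbb_next:
  assumes "length b = length \<eta>"
  shows "sum_list (rbb_next \<eta> b) = sum_list \<eta> - num_occupied \<eta> + sum_list b"
proof -
  let ?L = "length \<eta>"
  have "sum_list (rbb_next \<eta> b) = (\<Sum>i<?L. (\<eta> ! i - wz (\<eta> ! i)) + b ! i)"
    using assms by (simp add: sum_list_nth nth_rbb_next)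
  also have "\<dots> = (\<Sum>i<?L. \<eta> ! i - wz (\<eta> ! i)) + (\<Sum>i<?L. b ! i)" by (simp add: sum.distrib)
  also have "(\<Sum>i<?L. \<eta> ! i - wz (\<eta> ! i)) = (\<Sum>i<?L. \<eta> ! i) - (\<Sum>i<?L. wz (\<eta> ! i))"
    by (rule sum_subtractf_nat) (simp add: wz_le)
  finally show ?thesis using assms by (simp add: sum_list_nth num_occupied_sum)
qed

lemma num_occupied_le: "num_occupied \<eta> \<le> sum_list \<eta>"
  by (simp add: num_occupied_sum sum_list_nth wz_le sum_mono)

lemma num_occupied_le_length: "num_occupied \<eta> \<le> length \<eta>"
  by (simp add: num_occupied_def)

lemma set_replicate_unif:
  "0 < L \<Longrightarrow> bs \<in> set_pmf (replicate_pmf k (unif L)) \<Longrightarrow> length bs = k \<and> set bs \<subseteq> {..<L}"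
  by (auto simp: set_replicate_pmf set_unif)

lemma rbb_step_configs:
  assumes L: "0 < L" and \<eta>: "\<eta> \<in> rbb_configs L N"
  shows "set_pmf (rbb_step L \<eta>) \<subseteq> rbb_configs L N"
proof
  fix x assume "x \<in> set_pmf (rbb_step L \<eta>)"
  then obtain bs where bs: "bs \<in> set_pmf (replicate_pmf (num_occupied \<eta>) (unif L))"
    and x: "x = rbb_next \<eta> (cnt L bs)" by (auto simp: rbb_step_alt)
  have bs': "length bs = num_occupied \<eta>" "set bs \<subseteq> {..<L}" using set_replicate_unif[OF L bs] by auto
  have len: "length \<eta> = L" "sum_list \<eta> = N" using \<eta> by (auto simp: rbb_configs_def)
  show "x \<in> rbb_configs L N"
    using sum_rbb_next[of "cnt L bs" \<eta>] len bs' num_occupied_le[of \<eta>]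
    by (simp add: x rbb_configs_def sum_cnt)
qed

lemma finite_configs: "finite (rbb_configs L N)"
proof (rule finite_subset)
  show "rbb_configs L N \<subseteq> {xs. set xs \<subseteq> {..N} \<and> length xs = L}"
    using member_le_sum_list by (fastforce simp: rbb_configs_def)
  show "finite {xs. set xs \<subseteq> {..N} \<and> length xs = L}" by (rule finite_lists_length_eq) simp
qed

lemma finite_set_replicate_unif: "0 < L \<Longrightarrow> finite (set_pmf (replicate_pmf k (unif L)))"
  by (rule finite_subset[OF _ finite_lists_length_eq[of "{..<L}" k]]) (auto simp: set_replicate_pmf set_unif)

lemma finite_set_rbb_step: "0 < L \<Longrightarrow> finite (set_pmf (rbb_step L \<eta>))"
  by (simp add: rbb_step_alt finite_set_replicate_unif)



definition gmove :: "nat \<Rightarrow> nat list \<Rightarrow> nat list" where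
  "gmove L \<eta> = rbb_next \<eta> (cnt L (replicate (num_occupied \<eta>) 0))"

fun iter :: "nat \<Rightarrow> nat \<Rightarrow> nat list \<Rightarrow> nat list pmf" where
  "iter L 0 \<eta> = return_pmf \<eta>"
| "iter L (Suc n) \<eta> = bind_pmf (rbb_step L \<eta>) (iter L n)"

lemma gmove_in_step: "0 < L \<Longrightarrow> gmove L \<eta> \<in> set_pmf (rbb_step L \<eta>)"
  unfolding rbb_step_alt gmove_def
  by (auto simp: set_replicate_pmf set_unif intro!: imageI)

lemma iter_stationary:
  assumes "rbb_stationary L N \<nu>" shows "bind_pmf \<nu> (iter L n) = \<nu>"
proof (induction n)
  case 0 thus ?case by (simp add: bind_return_pmf')
next
  case (Suc n)
  have e: "iter L (Suc n) = (\<lambda>x. bind_pmf (rbb_step L x) (iter L n))" by (rule ext) simp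
  have "bind_pmf \<nu> (iter L (Suc n)) = bind_pmf (bind_pmf \<nu> (rbb_step L)) (iter L n)"
    unfolding e by (simp add: bind_assoc_pmf)
  also have "\<dots> = bind_pmf \<nu> (iter L n)" using assms by (simp add: rbb_stationary_def)
  finally show ?case using Suc.IH by (rule trans)
qed

lemma iter_configs:
  assumes "0 < L" shows "\<eta> \<in> rbb_configs L N \<Longrightarrow> set_pmf (iter L n \<eta>) \<subseteq> rbb_configs L N"
proof (induction n arbitrary: \<eta>)
  case 0 thus ?case by simp
next
  case (Suc n)
  show ?case using Suc.IH rbb_step_configs[OF assms Suc.prems] by (auto simp: set_bind_pmf)
qed

lemma iter_gmove: "0 < L \<Longrightarrow> (gmove L ^^ n) \<eta> \<in> set_pmf (iter L n \<eta>)"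
proof (induction n arbitrary: \<eta>)
  case 0 thus ?case by simp
next
  case (Suc n)
  have "(gmove L ^^ Suc n) \<eta> = (gmove L ^^ n) (gmove L \<eta>)" by (simp only: funpow_Suc_right o_def)
  thus ?case using Suc gmove_in_step[OF Suc.prems, of \<eta>] by (auto simp: set_bind_pmf)
qed

lemma gmove_configs: "0 < L \<Longrightarrow> \<eta> \<in> rbb_configs L N \<Longrightarrow> gmove L \<eta> \<in> rbb_configs L N"
  using gmove_in_step rbb_step_configs by blast

lemma gmove_nth:
  assumes "length \<eta> = L" "0 < i" "i < L"
  shows "gmove L \<eta> ! i = \<eta> ! i - 1"
  using assms by (simp add: gmove_def nth_rbb_next wz_def)

lemma gmove_pow:
  assumes L: "0 < L" and \<eta>: "\<eta> \<in> rbb_configs L N"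
  shows "(gmove L ^^ n) \<eta> \<in> rbb_configs L N \<and> (\<forall>i. 0 < i \<longrightarrow> i < L \<longrightarrow> (gmove L ^^ n) \<eta> ! i = \<eta> ! i - n)"
proof (induction n)
  case 0 thus ?case using \<eta> by simp
next
  case (Suc n)
  have len: "length ((gmove L ^^ n) \<eta>) = L" using Suc by (simp add: rbb_configs_def)
  show ?case using Suc gmove_configs[OF L] gmove_nth[OF len] by auto
qed

definition s0 :: "nat \<Rightarrow> nat \<Rightarrow> nat list" where "s0 L N = N # replicate (L - 1) 0"

lemma s0_configs: "0 < L \<Longrightarrow> s0 L N \<in> rbb_configs L N"
  by (simp add: s0_def rbb_configs_def)

lemma gmove_pow_N:
  assumes L: "0 < L" and \<eta>: "\<eta> \<in> rbb_configs L N"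
  shows "(gmove L ^^ N) \<eta> = s0 L N"
proof -
  let ?x = "(gmove L ^^ N) \<eta>"
  have x: "?x \<in> rbb_configs L N" and nth: "\<And>i. 0 < i \<Longrightarrow> i < L \<Longrightarrow> ?x ! i = \<eta> ! i - N"
    using gmove_pow[OF L \<eta>, of N] by auto
  have len: "length ?x = L" "length \<eta> = L" "sum_list ?x = N" "sum_list \<eta> = N"
    using x \<eta> by (auto simp: rbb_configs_def)
  have z: "?x ! i = 0" if "0 < i" "i < L" for i
  proof -
    have "\<eta> ! i \<le> N" using member_le_sum_list[of "\<eta> ! i" \<eta>] that len by auto
    thus ?thesis using nth[OF that] by simp
  qed
  have tl: "tl ?x = replicate (L - 1) 0"
    by (rule nth_equalityI) (use len z in \<open>auto simp: nth_tl\<close>)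
  have xe: "?x = ?x ! 0 # tl ?x" using len L by (cases ?x) auto
  have "sum_list ?x = ?x ! 0" by (subst xe) (simp add: tl)
  hence "?x ! 0 = N" using len by simp
  thus ?thesis using xe tl by (simp add: s0_def)
qed

lemma pmf_stationary_sum:
  assumes L: "0 < L" and st: "rbb_stationary L N \<nu>"
  shows "pmf \<nu> y = (\<Sum>x\<in>rbb_configs L N. pmf \<nu> x * pmf (iter L n x) y)"
proof -
  have "pmf \<nu> y = pmf (bind_pmf \<nu> (iter L n)) y" using iter_stationary[OF st] by simp
  also have "\<dots> = (\<integral>x. pmf (iter L n x) y \<partial>measure_pmf \<nu>)" by (rule pmf_bind)
  also have "\<dots> = (\<Sum>x\<in>rbb_configs L N. pmf (iter L n x) y * pmf \<nu> x)"
    by (rule integral_measure_pmf_real) (use st finite_configs in \<open>auto simp: rbb_stationary_def\<close>)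
  finally show ?thesis by (simp add: mult.commute)
qed

theorem rbb_stationary_unique:
  assumes L: "0 < L" and st1: "rbb_stationary L N \<nu>1" and st2: "rbb_stationary L N \<nu>2"
  shows "\<nu>1 = \<nu>2"
proof -
  define S where "S = rbb_configs L N"
  define Q where "Q x y = pmf (iter L N x) y" for x y
  define s where "s = s0 L N"
  have finS: "finite S" by (simp add: S_def finite_configs)
  have sS: "s \<in> S" using s0_configs[OF L] by (simp add: S_def s_def)
  have Qpos: "0 < Q x s" if "x \<in> S" for x
    using iter_gmove[OF L, of N x] gmove_pow_N[OF L, of x N] that
    by (simp add: Q_def S_def s_def pmf_positive)
  define \<delta> where "\<delta> = Min ((\<lambda>x. Q x s) ` S)"
  have \<delta>pos: "0 < \<delta>" unfolding \<delta>_def using finS sS Qpos by (subst Min_gr_iff) auto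
  have \<delta>le: "\<delta> \<le> Q x s" if "x \<in> S" for x unfolding \<delta>_def using finS that by (intro Min_le) auto
  have rows: "(\<Sum>y\<in>S. Q x y) = 1" if "x \<in> S" for x
    unfolding Q_def by (rule sum_pmf_eq_1[OF finS]) (use iter_configs[OF L] that in \<open>auto simp: S_def\<close>)
  define d where "d x = pmf \<nu>1 x - pmf \<nu>2 x" for x
  have sup1: "set_pmf \<nu>1 \<subseteq> S" and sup2: "set_pmf \<nu>2 \<subseteq> S"
    using st1 st2 by (auto simp: rbb_stationary_def S_def)
  have dsum: "(\<Sum>x\<in>S. d x) = 0"
    unfolding d_def sum_subtractf using sum_pmf_eq_1[OF finS sup1] sum_pmf_eq_1[OF finS sup2] by simp
  have dy: "d y = (\<Sum>x\<in>S. d x * Q x y)" for y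
    unfolding d_def Q_def S_def
    by (subst (1 2) pmf_stationary_sum[OF L, where n=N]) (use st1 st2 in \<open>auto simp: sum_subtractf left_diff_distrib\<close>)
  define M where "M x y = Q x y - (if y = s then \<delta> else 0)" for x y
  have Mnn: "0 \<le> M x y" if "x \<in> S" for x y using \<delta>le[OF that] by (auto simp: M_def Q_def)
  have dy2: "d y = (\<Sum>x\<in>S. d x * M x y)" for y
  proof -
    have "(\<Sum>x\<in>S. d x * M x y) = (\<Sum>x\<in>S. d x * Q x y) - (\<Sum>x\<in>S. d x) * (if y = s then \<delta> else 0)"
      by (simp add: M_def right_diff_distrib sum_subtractf sum_distrib_right)
    thus ?thesis using dy[of y] dsum by simp
  qed
  have Mrows: "(\<Sum>y\<in>S. M x y) = 1 - \<delta>" if "x \<in> S" for x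
    using rows[OF that] sS finS by (simp add: M_def sum_subtractf)
  let ?D = "\<Sum>y\<in>S. \<bar>d y\<bar>"
  have "?D \<le> (\<Sum>y\<in>S. \<Sum>x\<in>S. \<bar>d x\<bar> * M x y)"
  proof (rule sum_mono)
    fix y assume "y \<in> S"
    have "\<bar>d y\<bar> \<le> (\<Sum>x\<in>S. \<bar>d x * M x y\<bar>)" unfolding dy2[of y] by (rule sum_abs)
    also have "\<dots> = (\<Sum>x\<in>S. \<bar>d x\<bar> * M x y)" using Mnn by (intro sum.cong) (auto simp: abs_mult)
    finally show "\<bar>d y\<bar> \<le> (\<Sum>x\<in>S. \<bar>d x\<bar> * M x y)" .
  qed
  also have "\<dots> = (\<Sum>x\<in>S. \<bar>d x\<bar> * (\<Sum>y\<in>S. M x y))" by (subst sum.swap) (simp add: sum_distrib_left)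
  also have "\<dots> = (1 - \<delta>) * ?D" using Mrows by (simp add: sum_distrib_left mult.commute)
  finally have "\<delta> * ?D \<le> 0" by (simp add: algebra_simps)
  hence "?D \<le> 0" using \<delta>pos by (simp add: mult_le_0_iff)
  moreover have "0 \<le> ?D" by (rule sum_nonneg) simp
  ultimately have D0: "?D = 0" by linarith
  show ?thesis
  proof (rule pmf_eqI)
    fix y
    show "pmf \<nu>1 y = pmf \<nu>2 y"
    proof (cases "y \<in> S")
      case True
      hence "\<bar>d y\<bar> = 0" using D0 finS sum_nonneg_eq_0_iff[of S "\<lambda>y. \<bar>d y\<bar>"] by auto
      thus ?thesis by (simp add: d_def)
    next
      case False
      hence "y \<notin> set_pmf \<nu>1" "y \<notin> set_pmf \<nu>2" using sup1 sup2 by auto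
      thus ?thesis by (simp add: pmf_eq_0_set_pmf[symmetric])
    qed
  qed
qed



definition perm :: "(nat \<Rightarrow> nat) \<Rightarrow> nat list \<Rightarrow> nat list" where
  "perm \<sigma> \<eta> = map (\<lambda>i. \<eta> ! \<sigma> i) [0..<length \<eta>]"

lemma length_perm[simp]: "length (perm \<sigma> \<eta>) = length \<eta>" by (simp add: perm_def)
lemma nth_perm[simp]: "i < length \<eta> \<Longrightarrow> perm \<sigma> \<eta> ! i = \<eta> ! \<sigma> i" by (simp add: perm_def)

lemma sum_perm:
  assumes "bij_betw \<sigma> {..<length \<eta>} {..<length \<eta>}"
  shows "(\<Sum>i<length \<eta>. f (\<eta> ! \<sigma> i)) = (\<Sum>i<length \<eta>. f (\<eta> ! i))"
  using sum.reindex_bij_betw[OF assms, of "\<lambda>i. f (\<eta> ! i)"] by simp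

lemma sum_list_perm:
  assumes "bij_betw \<sigma> {..<length \<eta>} {..<length \<eta>}"
  shows "sum_list (perm \<sigma> \<eta>) = sum_list \<eta>"
  using sum_perm[OF assms, of id] by (simp add: sum_list_nth)

lemma num_occupied_perm:
  assumes "bij_betw \<sigma> {..<length \<eta>} {..<length \<eta>}"
  shows "num_occupied (perm \<sigma> \<eta>) = num_occupied \<eta>"
  using sum_perm[OF assms, of wz] by (simp add: num_occupied_sum)

lemma perm_rbb_next:
  assumes "bij_betw \<sigma> {..<length \<eta>} {..<length \<eta>}" "length b = length \<eta>"
  shows "perm \<sigma> (rbb_next \<eta> b) = rbb_next (perm \<sigma> \<eta>) (perm \<sigma> b)"
proof (rule nth_equalityI)
  fix i assume "i < length (perm \<sigma> (rbb_next \<eta> b))"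
  hence i: "i < length \<eta>" using assms by simp
  hence si: "\<sigma> i < length \<eta>" using assms(1) by (auto simp: bij_betw_def)
  show "perm \<sigma> (rbb_next \<eta> b) ! i = rbb_next (perm \<sigma> \<eta>) (perm \<sigma> b) ! i"
    using i si assms by (simp add: nth_rbb_next)
qed (use assms in simp)

lemma map_replicate_pmf: "map_pmf (map f) (replicate_pmf k p) = replicate_pmf k (map_pmf f p)"
proof (induction k)
  case 0 thus ?case by simp
next
  case (Suc k)
  have "map_pmf (map f) (replicate_pmf (Suc k) p) =
        bind_pmf p (\<lambda>x. bind_pmf (replicate_pmf k p) (\<lambda>xs. return_pmf (f x # map f xs)))"
    by (simp add: map_bind_pmf)
  also have "\<dots> = bind_pmf (map_pmf f p) (\<lambda>x. bind_pmf (map_pmf (map f) (replicate_pmf k p)) (\<lambda>xs. return_pmf (x # xs)))"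
    by (simp add: bind_map_pmf)
  also have "\<dots> = replicate_pmf (Suc k) (map_pmf f p)" by (simp add: Suc.IH)
  finally show ?case .
qed

lemma count_list_map_bij:
  assumes "\<And>x. x \<in> set bs \<Longrightarrow> (\<tau> x = i \<longleftrightarrow> x = j)"
  shows "count_list (map \<tau> bs) i = count_list bs j"
  using assms by (induction bs) auto

lemma perm_multinomial:
  assumes L: "0 < L" and \<sigma>: "bij_betw \<sigma> {..<L} {..<L}"
  shows "map_pmf (perm \<sigma>) (multinomial_uniform L k) = multinomial_uniform L k"
proof -
  define \<tau> where "\<tau> = inv_into {..<L} \<sigma>"
  have \<tau>: "bij_betw \<tau> {..<L} {..<L}" unfolding \<tau>_def by (rule bij_betw_inv_into[OF \<sigma>])
  have key: "\<tau> x = i \<longleftrightarrow> x = \<sigma> i" if "x < L" "i < L" for x i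
  proof
    assume "\<tau> x = i"
    moreover have "\<sigma> (\<tau> x) = x" unfolding \<tau>_def
      using \<sigma> that by (intro f_inv_into_f) (auto simp: bij_betw_def)
    ultimately show "x = \<sigma> i" by simp
  next
    assume "x = \<sigma> i"
    thus "\<tau> x = i" unfolding \<tau>_def using \<sigma> that by (auto simp: bij_betw_def inv_into_f_f)
  qed
  have pc: "perm \<sigma> (cnt L bs) = cnt L (map \<tau> bs)" if "set bs \<subseteq> {..<L}" for bs
  proof (rule nth_equalityI)
    fix i assume "i < length (perm \<sigma> (cnt L bs))"
    hence i: "i < L" by simp
    hence si: "\<sigma> i < L" using \<sigma> by (auto simp: bij_betw_def)
    show "perm \<sigma> (cnt L bs) ! i = cnt L (map \<tau> bs) ! i"
      using i si that key by (auto simp: intro!: count_list_map_bij[symmetric])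
  qed simp
  have "map_pmf (perm \<sigma>) (multinomial_uniform L k) = map_pmf (\<lambda>bs. perm \<sigma> (cnt L bs)) (replicate_pmf k (unif L))"
    by (simp add: multinomial_cnt pmf.map_comp o_def)
  also have "\<dots> = map_pmf (\<lambda>bs. cnt L (map \<tau> bs)) (replicate_pmf k (unif L))"
    by (rule map_pmf_cong[OF refl]) (use pc set_replicate_unif[OF L] in blast)
  also have "\<dots> = map_pmf (cnt L) (map_pmf (map \<tau>) (replicate_pmf k (unif L)))"
    by (simp add: pmf.map_comp o_def)
  also have "map_pmf \<tau> (unif L) = unif L"
    unfolding unif_def by (rule map_pmf_of_set_bij_betw[OF \<tau>]) (use L in auto)
  hence "map_pmf (map \<tau>) (replicate_pmf k (unif L)) = replicate_pmf k (unif L)"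
    by (simp add: map_replicate_pmf)
  finally show ?thesis by (simp add: multinomial_cnt)
qed

lemma rbb_step_next: "rbb_step L \<eta> = map_pmf (rbb_next \<eta>) (multinomial_uniform L (num_occupied \<eta>))"
  by (simp add: rbb_step_def rbb_next_def[abs_def])

lemma set_multinomial: "b \<in> set_pmf (multinomial_uniform L k) \<Longrightarrow> length b = L"
  by (auto simp: multinomial_cnt)

lemma rbb_step_perm:
  assumes L: "0 < L" and len: "length \<eta> = L" and \<sigma>: "bij_betw \<sigma> {..<L} {..<L}"
  shows "rbb_step L (perm \<sigma> \<eta>) = map_pmf (perm \<sigma>) (rbb_step L \<eta>)"
proof -
  let ?M = "multinomial_uniform L (num_occupied \<eta>)"
  have "map_pmf (perm \<sigma>) (rbb_step L \<eta>) = map_pmf (\<lambda>b. perm \<sigma> (rbb_next \<eta> b)) ?M"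
    by (simp add: rbb_step_next pmf.map_comp o_def)
  also have "\<dots> = map_pmf (\<lambda>b. rbb_next (perm \<sigma> \<eta>) (perm \<sigma> b)) ?M"
    by (rule map_pmf_cong[OF refl]) (use perm_rbb_next \<sigma> len set_multinomial in metis)
  also have "\<dots> = map_pmf (rbb_next (perm \<sigma> \<eta>)) (map_pmf (perm \<sigma>) ?M)"
    by (simp add: pmf.map_comp o_def)
  also have "\<dots> = rbb_step L (perm \<sigma> \<eta>)"
    using perm_multinomial[OF L \<sigma>] num_occupied_perm[of \<sigma> \<eta>] \<sigma> len by (simp add: rbb_step_next)
  finally show ?thesis by simp
qed

lemma stationary_perm:
  assumes L: "0 < L" and st: "rbb_stationary L N \<nu>" and \<sigma>: "bij_betw \<sigma> {..<L} {..<L}"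
  shows "map_pmf (perm \<sigma>) \<nu> = \<nu>"
proof -
  have sup: "set_pmf \<nu> \<subseteq> rbb_configs L N" using st by (simp add: rbb_stationary_def)
  have "rbb_stationary L N (map_pmf (perm \<sigma>) \<nu>)"
    unfolding rbb_stationary_def
  proof
    show "set_pmf (map_pmf (perm \<sigma>) \<nu>) \<subseteq> rbb_configs L N"
      using sup sum_list_perm[of \<sigma>] \<sigma> by (auto simp: rbb_configs_def)
    have "bind_pmf (map_pmf (perm \<sigma>) \<nu>) (rbb_step L) = bind_pmf \<nu> (\<lambda>\<eta>. rbb_step L (perm \<sigma> \<eta>))"
      by (simp add: bind_map_pmf)
    also have "\<dots> = bind_pmf \<nu> (\<lambda>\<eta>. map_pmf (perm \<sigma>) (rbb_step L \<eta>))"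
      by (rule bind_pmf_cong[OF refl]) (use sup rbb_step_perm[OF L _ \<sigma>] in \<open>auto simp: rbb_configs_def\<close>)
    also have "\<dots> = map_pmf (perm \<sigma>) (bind_pmf \<nu> (rbb_step L))" by (simp add: map_bind_pmf)
    also have "\<dots> = map_pmf (perm \<sigma>) \<nu>" using st by (simp add: rbb_stationary_def)
    finally show "bind_pmf (map_pmf (perm \<sigma>) \<nu>) (rbb_step L) = map_pmf (perm \<sigma>) \<nu>" .
  qed
  thus ?thesis using rbb_stationary_unique[OF L _ st] by blast
qed

definition sw :: "nat \<Rightarrow> nat \<Rightarrow> nat \<Rightarrow> nat" where
  "sw a b k = (if k = a then b else if k = b then a else k)"

lemma sw_bij: "a < L \<Longrightarrow> b < L \<Longrightarrow> bij_betw (sw a b) {..<L} {..<L}"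
  by (rule bij_betw_byWitness[where f'="sw a b"]) (auto simp: sw_def)

lemma exists_perm2:
  fixes i j L :: nat
  assumes "i < L" "j < L" "i \<noteq> j" "1 < L"
  shows "\<exists>\<sigma>. bij_betw \<sigma> {..<L} {..<L} \<and> \<sigma> 0 = i \<and> \<sigma> 1 = j"
proof -
  define j' where "j' = sw 0 i j"
  have j': "j' < L" "j' \<noteq> 0" using assms by (auto simp: j'_def sw_def)
  define \<sigma> where "\<sigma> = sw 0 i \<circ> sw 1 j'"
  have "bij_betw \<sigma> {..<L} {..<L}" unfolding \<sigma>_def
    using sw_bij[of 1 L j'] sw_bij[of 0 L i] assms j' by (intro bij_betw_trans) auto
  moreover have "\<sigma> 0 = i" using j' by (simp add: \<sigma>_def sw_def)
  moreover have "\<sigma> 1 = j" using j' assms by (auto simp: \<sigma>_def sw_def j'_def)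
  ultimately show ?thesis by blast
qed

lemma exch2:
  fixes f :: "nat \<Rightarrow> nat \<Rightarrow> real"
  assumes L: "1 < L" and st: "rbb_stationary L N \<nu>" and ij: "i < L" "j < L" "i \<noteq> j"
  shows "measure_pmf.expectation \<nu> (\<lambda>\<eta>. f (\<eta> ! i) (\<eta> ! j)) = measure_pmf.expectation \<nu> (\<lambda>\<eta>. f (\<eta> ! 0) (\<eta> ! 1))"
proof -
  obtain \<sigma> where \<sigma>: "bij_betw \<sigma> {..<L} {..<L}" "\<sigma> 0 = i" "\<sigma> 1 = j" using exists_perm2[OF ij L] by blast
  have sup: "set_pmf \<nu> \<subseteq> rbb_configs L N" using st by (simp add: rbb_stationary_def)
  have "measure_pmf.expectation \<nu> (\<lambda>\<eta>. f (\<eta> ! 0) (\<eta> ! 1)) =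
        measure_pmf.expectation (map_pmf (perm \<sigma>) \<nu>) (\<lambda>\<eta>. f (\<eta> ! 0) (\<eta> ! 1))"
    using stationary_perm[OF _ st \<sigma>(1)] L by simp
  also have "\<dots> = measure_pmf.expectation \<nu> (\<lambda>\<eta>. f (\<eta> ! i) (\<eta> ! j))"
    unfolding integral_map_pmf
  proof (rule integral_cong_AE)
    show "AE y in measure_pmf \<nu>. f (perm \<sigma> y ! 0) (perm \<sigma> y ! 1) = f (y ! i) (y ! j)"
      unfolding AE_measure_pmf_iff
    proof
      fix y assume "y \<in> set_pmf \<nu>"
      hence "length y = L" using sup by (auto simp: rbb_configs_def)
      thus "f (perm \<sigma> y ! 0) (perm \<sigma> y ! 1) = f (y ! i) (y ! j)" using L \<sigma> by simp
    qed
  qed auto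
  finally show ?thesis by simp
qed

lemma exch1:
  fixes f :: "nat \<Rightarrow> real"
  assumes L: "0 < L" and st: "rbb_stationary L N \<nu>" and i: "i < L"
  shows "measure_pmf.expectation \<nu> (\<lambda>\<eta>. f (\<eta> ! i)) = measure_pmf.expectation \<nu> (\<lambda>\<eta>. f (\<eta> ! 0))"
proof -
  have \<sigma>: "bij_betw (sw 0 i) {..<L} {..<L}" using sw_bij[of 0 L i] L i by simp
  have sup: "set_pmf \<nu> \<subseteq> rbb_configs L N" using st by (simp add: rbb_stationary_def)
  have "measure_pmf.expectation \<nu> (\<lambda>\<eta>. f (\<eta> ! 0)) =
        measure_pmf.expectation (map_pmf (perm (sw 0 i)) \<nu>) (\<lambda>\<eta>. f (\<eta> ! 0))"
    using stationary_perm[OF L st \<sigma>] by simp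
  also have "\<dots> = measure_pmf.expectation \<nu> (\<lambda>\<eta>. f (\<eta> ! i))"
    unfolding integral_map_pmf
  proof (rule integral_cong_AE)
    show "AE y in measure_pmf \<nu>. f (perm (sw 0 i) y ! 0) = f (y ! i)"
      unfolding AE_measure_pmf_iff
    proof
      fix y assume "y \<in> set_pmf \<nu>"
      hence "length y = L" using sup by (auto simp: rbb_configs_def)
      thus "f (perm (sw 0 i) y ! 0) = f (y ! i)" using L by (simp add: sw_def)
    qed
  qed auto
  finally show ?thesis by simp
qed



lemma replicate_Suc_map: "replicate_pmf (Suc k) p = bind_pmf p (\<lambda>x. map_pmf (Cons x) (replicate_pmf k p))"
  by (simp add: map_pmf_def)

lemma expectation_rep_Suc:
  fixes F :: "nat list \<Rightarrow> real"
  assumes L: "0 < L"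
  shows "measure_pmf.expectation (replicate_pmf (Suc k) (unif L)) F =
         (\<Sum>x<L. measure_pmf.expectation (replicate_pmf k (unif L)) (\<lambda>bs. F (x # bs))) / L"
proof -
  have "measure_pmf.expectation (replicate_pmf (Suc k) (unif L)) F =
        (\<Sum>x\<in>{..<L}. pmf (unif L) x *\<^sub>R measure_pmf.expectation (map_pmf (Cons x) (replicate_pmf k (unif L))) F)"
    unfolding replicate_Suc_map
    by (rule pmf_expectation_bind) (use L finite_set_replicate_unif[OF L] in \<open>auto simp: set_unif\<close>)
  also have "\<dots> = (\<Sum>x<L. measure_pmf.expectation (replicate_pmf k (unif L)) (\<lambda>bs. F (x # bs)) / L)"
  proof (intro sum.cong refl)
    fix x assume "x \<in> {..<L}"
    moreover have "{..<L} \<noteq> {}" using L by auto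
    ultimately have "pmf (unif L) x = 1 / L" by (simp add: unif_def)
    thus "pmf (unif L) x *\<^sub>R measure_pmf.expectation (map_pmf (Cons x) (replicate_pmf k (unif L))) F =
          measure_pmf.expectation (replicate_pmf k (unif L)) (\<lambda>bs. F (x # bs)) / L" by simp
  qed
  finally show ?thesis by (simp add: sum_divide_distrib)
qed

lemma rep_moment:
  fixes a :: "nat \<Rightarrow> real"
  assumes L: "0 < L"
  shows "measure_pmf.expectation (replicate_pmf k (unif L)) (\<lambda>bs. \<Sum>i<L. (a i + count_list bs i)^2) =
         (\<Sum>i<L. (a i)^2) + 2 * real k * (\<Sum>i<L. a i) / L + real k + real k * (real k - 1) / L"
proof (induction k arbitrary: a)
  case 0 thus ?case by simp
next
  case (Suc k)
  define A where "A = (\<Sum>i<L. a i)"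
  define Q where "Q = (\<Sum>i<L. (a i)^2)"
  have step: "measure_pmf.expectation (replicate_pmf k (unif L)) (\<lambda>bs. \<Sum>i<L. (a i + count_list (x # bs) i)^2)
       = Q + 2 * a x + 1 + 2 * real k * (A + 1) / L + real k + real k * (real k - 1) / L" if x: "x < L" for x
  proof -
    define a' where "a' i = a i + (if x = i then 1 else 0)" for i
    have e: "(\<lambda>bs. \<Sum>i<L. (a i + real (count_list (x # bs) i))^2) = (\<lambda>bs. \<Sum>i<L. (a' i + count_list bs i)^2)"
      by (intro ext sum.cong) (auto simp: a'_def algebra_simps)
    have s1: "(\<Sum>i<L. (a' i)^2) = Q + 2 * a x + 1"
    proof -
      have "(\<Sum>i<L. (a' i)^2) = (\<Sum>i<L. (a i)^2 + (if x = i then 2 * a i + 1 else 0))"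
        by (intro sum.cong) (auto simp: a'_def power2_eq_square algebra_simps)
      also have "\<dots> = Q + 2 * a x + 1" using x by (simp add: sum.distrib Q_def sum.delta)
      finally show ?thesis .
    qed
    have s2: "(\<Sum>i<L. a' i) = A + 1" using x by (simp add: a'_def sum.distrib A_def sum.delta)
    show ?thesis unfolding e Suc.IH s1 s2 ..
  qed
  have "measure_pmf.expectation (replicate_pmf (Suc k) (unif L)) (\<lambda>bs. \<Sum>i<L. (a i + count_list bs i)^2) =
        (\<Sum>x<L. Q + 2 * a x + 1 + 2 * real k * (A + 1) / L + real k + real k * (real k - 1) / L) / L"
    unfolding expectation_rep_Suc[OF L] using step by (intro arg_cong2[where f="(/)"] sum.cong refl) auto
  also have "\<dots> = (L * (Q + 1 + 2 * real k * (A + 1) / L + real k + real k * (real k - 1) / L) + 2 * A) / L"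
    by (simp add: sum.distrib sum_distrib_left[symmetric] sum_distrib_right[symmetric] A_def algebra_simps)
  also have "\<dots> = Q + 2 * real (Suc k) * A / L + real (Suc k) + real (Suc k) * (real (Suc k) - 1) / L"
    using L by (simp add: field_simps)
  finally show ?case by (simp add: Q_def A_def)
qed

lemma rep_pgf:
  fixes z :: real
  assumes L: "0 < L"
  shows "measure_pmf.expectation (replicate_pmf k (unif L)) (\<lambda>bs. z ^ (c + count_list bs 0)) =
         z ^ c * ((real L - 1 + z) / L) ^ k"
proof (induction k arbitrary: c)
  case 0 thus ?case by simp
next
  case (Suc k)
  have "measure_pmf.expectation (replicate_pmf (Suc k) (unif L)) (\<lambda>bs. z ^ (c + count_list bs 0)) =
        (\<Sum>x<L. z ^ (c + (if x = 0 then 1 else 0)) * ((real L - 1 + z) / L) ^ k) / L"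
    unfolding expectation_rep_Suc[OF L]
  proof (intro arg_cong2[where f="(/)"] sum.cong refl)
    fix x :: nat
    have "(\<lambda>bs. z ^ (c + count_list (x # bs) 0)) = (\<lambda>bs. z ^ ((c + (if x = 0 then 1 else 0)) + count_list bs 0))"
      by auto
    thus "measure_pmf.expectation (replicate_pmf k (unif L)) (\<lambda>bs. z ^ (c + count_list (x # bs) 0)) =
          z ^ (c + (if x = 0 then 1 else 0)) * ((real L - 1 + z) / L) ^ k" using Suc.IH by simp
  qed
  also have "(\<Sum>x<L. z ^ (c + (if x = 0 then 1 else 0)) * ((real L - 1 + z) / L) ^ k) =
             (z ^ (c + 1) + (L - 1) * z ^ c) * ((real L - 1 + z) / L) ^ k"
  proof -
    have "(\<Sum>x<L. z ^ (c + (if x = 0 then 1 else 0))) = z ^ (c + 1) + (L - 1) * z ^ c"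
    proof -
      have "{..<L} = insert 0 {1..<L}" using L by auto
      hence "(\<Sum>x<L. z ^ (c + (if x = 0 then 1 else 0))) = z ^ (c + 1) + (\<Sum>x\<in>{1..<L}. z ^ c)"
        by (simp add: sum.insert)
      thus ?thesis using L by (simp add: of_nat_diff)
    qed
    thus ?thesis by (simp add: sum_distrib_right[symmetric])
  qed
  finally show ?case using L by (simp add: field_simps)
qed

lemma real_step: "real (a - wz a + b) = real a - real (wz a) + real b"
  by (simp add: wz_def)

lemma step_moment:
  assumes L: "0 < L" and \<eta>: "\<eta> \<in> rbb_configs L N"
  shows "measure_pmf.expectation (rbb_step L \<eta>) (\<lambda>x. \<Sum>i<L. (real (x ! i))^2) =
     (\<Sum>i<L. (real (\<eta> ! i) - wz (\<eta> ! i))^2) + 2 * real (num_occupied \<eta>) * (real N - num_occupied \<eta>) / L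
      + real (num_occupied \<eta>) + real (num_occupied \<eta>) * (real (num_occupied \<eta>) - 1) / L"
proof -
  have len: "length \<eta> = L" "sum_list \<eta> = N" using \<eta> by (auto simp: rbb_configs_def)
  define a where "a i = real (\<eta> ! i) - wz (\<eta> ! i)" for i
  have "measure_pmf.expectation (rbb_step L \<eta>) (\<lambda>x. \<Sum>i<L. (real (x ! i))^2) =
        measure_pmf.expectation (replicate_pmf (num_occupied \<eta>) (unif L)) (\<lambda>bs. \<Sum>i<L. (a i + count_list bs i)^2)"
    unfolding rbb_step_alt integral_map_pmf
    by (intro Bochner_Integration.integral_cong refl sum.cong)
       (simp_all add: len nth_rbb_next a_def real_step del: of_nat_add)
  also have "(\<Sum>i<L. a i) = real N - num_occupied \<eta>"
    using len by (simp add: a_def sum_subtractf num_occupied_sum sum_list_nth flip: of_nat_sum)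
  hence "measure_pmf.expectation (replicate_pmf (num_occupied \<eta>) (unif L)) (\<lambda>bs. \<Sum>i<L. (a i + count_list bs i)^2)
      = (\<Sum>i<L. (a i)^2) + 2 * real (num_occupied \<eta>) * (real N - num_occupied \<eta>) / L
      + real (num_occupied \<eta>) + real (num_occupied \<eta>) * (real (num_occupied \<eta>) - 1) / L"
    by (simp add: rep_moment[OF L])
  finally show ?thesis by (simp add: a_def)
qed

lemma step_pgf0:
  fixes z :: real
  assumes L: "0 < L" and \<eta>: "\<eta> \<in> rbb_configs L N"
  shows "measure_pmf.expectation (rbb_step L \<eta>) (\<lambda>x. z ^ (x ! 0)) =
     z ^ (\<eta> ! 0 - wz (\<eta> ! 0)) * ((real L - 1 + z) / L) ^ num_occupied \<eta>"
proof -
  have len: "length \<eta> = L" using \<eta> by (auto simp: rbb_configs_def)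
  have "measure_pmf.expectation (rbb_step L \<eta>) (\<lambda>x. z ^ (x ! 0)) =
        measure_pmf.expectation (replicate_pmf (num_occupied \<eta>) (unif L)) (\<lambda>bs. z ^ ((\<eta> ! 0 - wz (\<eta> ! 0)) + count_list bs 0))"
    unfolding rbb_step_alt integral_map_pmf
    by (intro Bochner_Integration.integral_cong refl) (simp add: len nth_rbb_next L)
  also have "\<dots> = z ^ (\<eta> ! 0 - wz (\<eta> ! 0)) * ((real L - 1 + z) / L) ^ num_occupied \<eta>"
    by (rule rep_pgf[OF L])
  finally show ?thesis .
qed

lemma stationary_expectation:
  fixes f :: "nat list \<Rightarrow> real"
  assumes L: "0 < L" and st: "rbb_stationary L N \<nu>"
  shows "measure_pmf.expectation \<nu> f = measure_pmf.expectation \<nu> (\<lambda>\<eta>. measure_pmf.expectation (rbb_step L \<eta>) f)"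
proof -
  have sup: "set_pmf \<nu> \<subseteq> rbb_configs L N" using st by (simp add: rbb_stationary_def)
  have "measure_pmf.expectation \<nu> f = measure_pmf.expectation (bind_pmf \<nu> (rbb_step L)) f"
    using st by (simp add: rbb_stationary_def)
  also have "\<dots> = (\<Sum>a\<in>rbb_configs L N. pmf \<nu> a *\<^sub>R measure_pmf.expectation (rbb_step L a) f)"
    by (rule pmf_expectation_bind) (use sup finite_configs finite_set_rbb_step[OF L] in auto)
  also have "\<dots> = measure_pmf.expectation \<nu> (\<lambda>\<eta>. measure_pmf.expectation (rbb_step L \<eta>) f)"
    by (subst integral_measure_pmf[OF finite_configs]) (use sup in auto)
  finally show ?thesis .
qed



lemma split_expectation_M:
  fixes p :: "nat pmf" and f :: "nat \<Rightarrow> real"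
  assumes B: "\<And>a. \<bar>f a\<bar> \<le> B"
  shows "\<bar>measure_pmf.expectation p f - (\<Sum>a<M. pmf p a * f a)\<bar> \<le> B * (1 - (\<Sum>a<M. pmf p a))"
proof -
  have B0: "0 \<le> B" using B[of 0] by linarith
  have i1: "integrable (measure_pmf p) f" by (rule integrable_pmf_bounded[OF B])
  have i2: "integrable (measure_pmf p) (\<lambda>a. f a * indicator {..<M} a)"
    by (rule integrable_pmf_bounded[where B=B]) (use B B0 in \<open>auto split: split_indicator\<close>)
  have i3: "integrable (measure_pmf p) (\<lambda>a. B * indicator (- {..<M}) a)"
    by (rule integrable_pmf_bounded[where B=B]) (use B0 in \<open>auto split: split_indicator\<close>)
  have i4: "integrable (measure_pmf p) (\<lambda>a. f a * indicator (- {..<M}) a)"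
    by (rule integrable_pmf_bounded[where B=B]) (use B B0 in \<open>auto split: split_indicator\<close>)
  have e1: "measure_pmf.expectation p (\<lambda>a. f a * indicator {..<M} a) = (\<Sum>a<M. pmf p a * f a)"
    by (subst integral_measure_pmf_real[where A="{..<M}"]) (auto simp: indicator_def intro!: sum.cong)
  have e2: "measure_pmf.expectation p (\<lambda>a. indicator {..<M} a :: real) = (\<Sum>a<M. pmf p a)"
    by (subst integral_measure_pmf_real[where A="{..<M}"]) (auto simp: indicator_def intro!: sum.cong)
  have "measure_pmf.expectation p f = measure_pmf.expectation p (\<lambda>a. f a * indicator {..<M} a + f a * indicator (- {..<M}) a)"
    by (intro Bochner_Integration.integral_cong) (auto split: split_indicator)
  also have "\<dots> = (\<Sum>a<M. pmf p a * f a) + measure_pmf.expectation p (\<lambda>a. f a * indicator (- {..<M}) a)"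
    using i2 i4 e1 by simp
  finally have d: "measure_pmf.expectation p f - (\<Sum>a<M. pmf p a * f a) = measure_pmf.expectation p (\<lambda>a. f a * indicator (- {..<M}) a)"
    by simp
  have "\<bar>measure_pmf.expectation p (\<lambda>a. f a * indicator (- {..<M}) a)\<bar> \<le>
        measure_pmf.expectation p (\<lambda>a. \<bar>f a * indicator (- {..<M}) a\<bar>)"
    using integral_norm_bound[of "measure_pmf p" "\<lambda>a. f a * indicator (- {..<M}) a"] by simp
  also have "\<dots> \<le> measure_pmf.expectation p (\<lambda>a. B * indicator (- {..<M}) a)"
    by (rule integral_mono) (use i3 i4 B in \<open>auto split: split_indicator\<close>)
  also have "measure_pmf.expectation p (\<lambda>a. B * indicator (- {..<M}) a) = B * measure_pmf.expectation p (\<lambda>a. 1 - indicator {..<M} a)"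
  proof -
    have "(\<lambda>a. B * indicator (- {..<M}) a) = (\<lambda>a. B * (1 - indicator {..<M} a :: real))"
      by (auto simp: indicator_def)
    thus ?thesis by (simp only: integral_mult_right_zero)
  qed
  also have "measure_pmf.expectation p (\<lambda>a. 1 - indicator {..<M} a :: real) = 1 - (\<Sum>a<M. pmf p a)"
  proof -
    have "integrable (measure_pmf p) (\<lambda>a. indicator {..<M} a :: real)"
      by (rule integrable_pmf_bounded[where B=1]) (auto split: split_indicator)
    thus ?thesis using e2 by (simp add: Bochner_Integration.integral_diff)
  qed
  finally show ?thesis using d by simp
qed

lemma pmf_conv_expectation:
  fixes P :: "'b \<Rightarrow> nat pmf" and f :: "nat \<Rightarrow> real"
  assumes conv: "\<And>a. ((\<lambda>L. pmf (P L) a) \<longlongrightarrow> pmf \<mu> a) F" and B: "\<And>a. \<bar>f a\<bar> \<le> B"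
  shows "((\<lambda>L. measure_pmf.expectation (P L) f) \<longlongrightarrow> measure_pmf.expectation \<mu> f) F"
proof (rule tendstoI)
  fix e :: real assume e: "0 < e"
  have B0: "0 \<le> B" using B[of 0] by linarith
  define e' where "e' = e / (4 * (B + 1))"
  have e'0: "0 < e'" using e B0 by (simp add: e'_def)
  have "(\<lambda>n. \<Sum>a<n. pmf \<mu> a) \<longlonglongrightarrow> 1" using pmf_sums_one[of \<mu>] by (simp add: sums_def)
  hence "eventually (\<lambda>n. 1 - e' < (\<Sum>a<n. pmf \<mu> a)) sequentially"
    using e'0 by (intro order_tendstoD(1)) auto
  then obtain M where M: "1 - e' < (\<Sum>a<M. pmf \<mu> a)" by (auto simp: eventually_sequentially)
  have "((\<lambda>L. \<Sum>a<M. \<bar>pmf (P L) a - pmf \<mu> a\<bar>) \<longlongrightarrow> (\<Sum>a<M. \<bar>pmf \<mu> a - pmf \<mu> a\<bar>)) F"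
    by (intro tendsto_sum tendsto_rabs tendsto_diff conv tendsto_const)
  hence "eventually (\<lambda>L. (\<Sum>a<M. \<bar>pmf (P L) a - pmf \<mu> a\<bar>) < e') F"
    using e'0 by (intro order_tendstoD(2)) auto
  thus "eventually (\<lambda>L. dist (measure_pmf.expectation (P L) f) (measure_pmf.expectation \<mu> f) < e) F"
  proof eventually_elim
    case (elim L)
    let ?D = "\<Sum>a<M. \<bar>pmf (P L) a - pmf \<mu> a\<bar>"
    have s1: "\<bar>(\<Sum>a<M. pmf (P L) a * f a) - (\<Sum>a<M. pmf \<mu> a * f a)\<bar> \<le> B * ?D"
    proof -
      have "\<bar>(\<Sum>a<M. pmf (P L) a * f a) - (\<Sum>a<M. pmf \<mu> a * f a)\<bar> = \<bar>\<Sum>a<M. (pmf (P L) a - pmf \<mu> a) * f a\<bar>"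
        by (simp add: sum_subtractf left_diff_distrib)
      also have "\<dots> \<le> (\<Sum>a<M. \<bar>(pmf (P L) a - pmf \<mu> a) * f a\<bar>)" by (rule sum_abs)
      also have "\<dots> \<le> (\<Sum>a<M. \<bar>pmf (P L) a - pmf \<mu> a\<bar> * B)"
        by (intro sum_mono) (auto simp: abs_mult intro!: mult_left_mono B)
      also have "\<dots> = B * ?D" by (simp add: sum_distrib_left mult.commute)
      finally show ?thesis .
    qed
    have s2: "(\<Sum>a<M. pmf \<mu> a) - (\<Sum>a<M. pmf (P L) a) \<le> ?D"
    proof -
      have "(\<Sum>a<M. pmf \<mu> a) - (\<Sum>a<M. pmf (P L) a) = (\<Sum>a<M. pmf \<mu> a - pmf (P L) a)" by (simp add: sum_subtractf)
      also have "\<dots> \<le> ?D" by (intro sum_mono) auto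
      finally show ?thesis .
    qed
    note t1 = split_expectation_M[where f=f and B=B and p="P L" and M=M, OF B]
    note t2 = split_expectation_M[where f=f and B=B and p=\<mu> and M=M, OF B]
    have "\<bar>measure_pmf.expectation (P L) f - measure_pmf.expectation \<mu> f\<bar> \<le>
          B * ?D + B * (1 - (\<Sum>a<M. pmf (P L) a)) + B * (1 - (\<Sum>a<M. pmf \<mu> a))"
      using s1 t1 t2 by linarith
    also have "\<dots> \<le> B * e' + B * (2 * e') + B * e'"
    proof -
      have "B * ?D \<le> B * e'" using elim B0 by (intro mult_left_mono) auto
      moreover have "B * (1 - (\<Sum>a<M. pmf (P L) a)) \<le> B * (2 * e')" using elim s2 M B0 by (intro mult_left_mono) auto
      moreover have "B * (1 - (\<Sum>a<M. pmf \<mu> a)) \<le> B * e'" using M B0 by (intro mult_left_mono) auto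
      ultimately show ?thesis by linarith
    qed
    also have "\<dots> = 4 * B * e'" by simp
    also have "\<dots> < e" using e B0 by (simp add: e'_def field_simps)
    finally show ?case by (simp add: dist_real_def)
  qed
qed



lemma stat_finite: "rbb_stationary L N \<nu> \<Longrightarrow> finite (set_pmf \<nu>)"
  by (rule finite_subset[OF _ finite_configs]) (auto simp: rbb_stationary_def)

lemma stat_int: "rbb_stationary L N \<nu> \<Longrightarrow> integrable (measure_pmf \<nu>) (f :: nat list \<Rightarrow> real)"
  by (rule integrable_measure_pmf_finite[OF stat_finite])

lemma stat_cong:
  fixes f g :: "nat list \<Rightarrow> real"
  assumes "rbb_stationary L N \<nu>" "\<And>\<eta>. \<eta> \<in> rbb_configs L N \<Longrightarrow> f \<eta> = g \<eta>"
  shows "measure_pmf.expectation \<nu> f = measure_pmf.expectation \<nu> g"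
  by (rule integral_cong_AE) (use assms in \<open>auto simp: AE_measure_pmf_iff rbb_stationary_def\<close>)

lemma EK:
  assumes L: "0 < L" and st: "rbb_stationary L N \<nu>"
  shows "measure_pmf.expectation \<nu> (\<lambda>\<eta>. real (num_occupied \<eta>)) = L * measure_pmf.expectation \<nu> (\<lambda>\<eta>. real (wz (\<eta> ! 0)))"
proof -
  have "measure_pmf.expectation \<nu> (\<lambda>\<eta>. real (num_occupied \<eta>)) = measure_pmf.expectation \<nu> (\<lambda>\<eta>. \<Sum>i<L. real (wz (\<eta> ! i)))"
    by (rule stat_cong[OF st]) (auto simp: num_occupied_sum rbb_configs_def)
  also have "\<dots> = (\<Sum>i<L. measure_pmf.expectation \<nu> (\<lambda>\<eta>. real (wz (\<eta> ! i))))"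
    by (simp add: stat_int[OF st])
  also have "\<dots> = (\<Sum>i<L. measure_pmf.expectation \<nu> (\<lambda>\<eta>. real (wz (\<eta> ! 0))))"
    by (intro sum.cong refl exch1[OF L st]) auto
  finally show ?thesis by simp
qed

lemma EK2:
  assumes L: "1 < L" and st: "rbb_stationary L N \<nu>"
  shows "measure_pmf.expectation \<nu> (\<lambda>\<eta>. (real (num_occupied \<eta>))^2) =
     L * measure_pmf.expectation \<nu> (\<lambda>\<eta>. real (wz (\<eta> ! 0))) +
     real L * (real L - 1) * measure_pmf.expectation \<nu> (\<lambda>\<eta>. real (wz (\<eta> ! 0)) * real (wz (\<eta> ! 1)))"
proof -
  let ?p = "measure_pmf.expectation \<nu> (\<lambda>\<eta>. real (wz (\<eta> ! 0)))"
  let ?q = "measure_pmf.expectation \<nu> (\<lambda>\<eta>. real (wz (\<eta> ! 0)) * real (wz (\<eta> ! 1)))"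
  have L0: "0 < L" using L by simp
  have "measure_pmf.expectation \<nu> (\<lambda>\<eta>. (real (num_occupied \<eta>))^2) =
        measure_pmf.expectation \<nu> (\<lambda>\<eta>. \<Sum>i<L. \<Sum>j<L. real (wz (\<eta> ! i)) * real (wz (\<eta> ! j)))"
    by (rule stat_cong[OF st])
       (auto simp: num_occupied_sum rbb_configs_def power2_eq_square sum_product of_nat_sum)
  also have "\<dots> = (\<Sum>i<L. \<Sum>j<L. measure_pmf.expectation \<nu> (\<lambda>\<eta>. real (wz (\<eta> ! i)) * real (wz (\<eta> ! j))))"
    by (simp add: stat_int[OF st])
  also have "\<dots> = (\<Sum>i<L. \<Sum>j<L. if j = i then ?p else ?q)"
  proof (intro sum.cong refl)
    fix i j assume i: "i \<in> {..<L}" and j: "j \<in> {..<L}"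
    show "measure_pmf.expectation \<nu> (\<lambda>\<eta>. real (wz (\<eta> ! i)) * real (wz (\<eta> ! j))) = (if j = i then ?p else ?q)"
    proof (cases "j = i")
      case True
      have "measure_pmf.expectation \<nu> (\<lambda>\<eta>. real (wz (\<eta> ! i)) * real (wz (\<eta> ! i))) =
            measure_pmf.expectation \<nu> (\<lambda>\<eta>. real (wz (\<eta> ! i)))"
        by (intro Bochner_Integration.integral_cong refl) (simp add: wz_def)
      also have "\<dots> = ?p" using exch1[OF L0 st, of i "\<lambda>x. real (wz x)"] i by simp
      finally show ?thesis using True by simp
    next
      case False
      thus ?thesis using exch2[OF L st, of i j "\<lambda>x y. real (wz x) * real (wz y)"] i j by simp
    qed
  qed
  also have "\<dots> = (\<Sum>i<L. ?p + (L - 1) * ?q)"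
  proof (intro sum.cong refl)
    fix i assume i: "i \<in> {..<L}"
    have "(\<Sum>j<L. if j = i then ?p else ?q) = (\<Sum>j\<in>{..<L} \<inter> {i}. ?p) + (\<Sum>j\<in>{..<L} - {i}. ?q)"
      by (simp add: sum.If_cases Int_def Diff_eq)
    also have "\<dots> = ?p + (L - 1) * ?q" using i by (simp add: of_nat_diff)
    finally show "(\<Sum>j<L. if j = i then ?p else ?q) = ?p + (L - 1) * ?q" .
  qed
  also have "\<dots> = L * ?p + real L * (real L - 1) * ?q" using L by (simp add: algebra_simps of_nat_diff)
  finally show ?thesis .
qed

lemma sq_step: "(real x - real (wz x))^2 = (real x)^2 - 2 * real x + real (wz x)"
  by (simp add: wz_def power2_eq_square algebra_simps)

lemma arith_moment:
  fixes S n k l :: real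
  shows "(S - 2 * n + k) + 2 * k * (n - k) / l + k + k * (k - 1) / l =
         S + (- 2 * n + 2 * k + 2 * n * k / l - k^2 / l - k / l)"
  by (simp add: diff_divide_distrib add_divide_distrib power2_eq_square algebra_simps)

lemma moment_identity:
  assumes L: "0 < L" and st: "rbb_stationary L N \<nu>"
  shows "0 = - 2 * real N + 2 * measure_pmf.expectation \<nu> (\<lambda>\<eta>. real (num_occupied \<eta>))
     + 2 * real N * measure_pmf.expectation \<nu> (\<lambda>\<eta>. real (num_occupied \<eta>)) / L
     - measure_pmf.expectation \<nu> (\<lambda>\<eta>. (real (num_occupied \<eta>))^2) / L
     - measure_pmf.expectation \<nu> (\<lambda>\<eta>. real (num_occupied \<eta>)) / L"
proof -
  define SS where "SS \<eta> = (\<Sum>i<L. (real (\<eta> ! i))^2)" for \<eta> :: "nat list"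
  define K where "K \<eta> = real (num_occupied \<eta>)" for \<eta>
  define g where "g \<eta> = - 2 * real N + 2 * K \<eta> + 2 * real N * K \<eta> / L - (K \<eta>)^2 / L - K \<eta> / L" for \<eta>
  have "measure_pmf.expectation \<nu> SS = measure_pmf.expectation \<nu> (\<lambda>\<eta>. measure_pmf.expectation (rbb_step L \<eta>) SS)"
    by (rule stationary_expectation[OF L st])
  also have "\<dots> = measure_pmf.expectation \<nu> (\<lambda>\<eta>. SS \<eta> + g \<eta>)"
  proof (rule stat_cong[OF st])
    fix \<eta> assume \<eta>: "\<eta> \<in> rbb_configs L N"
    have len: "length \<eta> = L" "sum_list \<eta> = N" using \<eta> by (auto simp: rbb_configs_def)
    have "(\<Sum>i<L. (real (\<eta> ! i) - wz (\<eta> ! i))^2) = (\<Sum>i<L. (real (\<eta> ! i))^2 - 2 * real (\<eta> ! i) + real (wz (\<eta> ! i)))"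
      by (rule sum.cong[OF refl]) (rule sq_step)
    also have "\<dots> = SS \<eta> - 2 * (\<Sum>i<L. real (\<eta> ! i)) + (\<Sum>i<L. real (wz (\<eta> ! i)))"
      by (simp add: sum.distrib sum_subtractf sum_distrib_left SS_def)
    also have "(\<Sum>i<L. real (\<eta> ! i)) = real N" using len by (simp add: sum_list_nth flip: of_nat_sum)
    also have "(\<Sum>i<L. real (wz (\<eta> ! i))) = K \<eta>" using len by (simp add: K_def num_occupied_sum flip: of_nat_sum)
    finally have s1: "(\<Sum>i<L. (real (\<eta> ! i) - wz (\<eta> ! i))^2) = SS \<eta> - 2 * real N + K \<eta>" .
    have "measure_pmf.expectation (rbb_step L \<eta>) SS =
        (SS \<eta> - 2 * real N + K \<eta>) + 2 * K \<eta> * (real N - K \<eta>) / L + K \<eta> + K \<eta> * (K \<eta> - 1) / L"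
      unfolding SS_def[abs_def] step_moment[OF L \<eta>] s1[unfolded SS_def] K_def ..
    also have "\<dots> = SS \<eta> + g \<eta>" unfolding g_def by (rule arith_moment)
    finally show "measure_pmf.expectation (rbb_step L \<eta>) SS = SS \<eta> + g \<eta>" .
  qed
  also have "\<dots> = measure_pmf.expectation \<nu> SS + measure_pmf.expectation \<nu> g"
    by (rule Bochner_Integration.integral_add) (rule stat_int[OF st])+
  finally have "measure_pmf.expectation \<nu> g = 0" by simp
  moreover have "measure_pmf.expectation \<nu> g = - 2 * real N + 2 * measure_pmf.expectation \<nu> K
     + 2 * real N * measure_pmf.expectation \<nu> K / L
     - measure_pmf.expectation \<nu> (\<lambda>\<eta>. (K \<eta>)^2) / L
     - measure_pmf.expectation \<nu> K / L"
    unfolding g_def by (simp add: stat_int[OF st])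
  ultimately show ?thesis by (simp add: K_def[abs_def])
qed

lemma pgf_identity:
  fixes z :: real
  assumes L: "0 < L" and st: "rbb_stationary L N \<nu>"
  shows "measure_pmf.expectation \<nu> (\<lambda>\<eta>. z ^ (\<eta> ! 0)) =
         measure_pmf.expectation \<nu> (\<lambda>\<eta>. z ^ (\<eta> ! 0 - wz (\<eta> ! 0)) * ((real L - 1 + z) / L) ^ num_occupied \<eta>)"
proof -
  have "measure_pmf.expectation \<nu> (\<lambda>\<eta>. z ^ (\<eta> ! 0)) =
        measure_pmf.expectation \<nu> (\<lambda>\<eta>. measure_pmf.expectation (rbb_step L \<eta>) (\<lambda>x. z ^ (x ! 0)))"
    by (rule stationary_expectation[OF L st])
  also have "\<dots> = measure_pmf.expectation \<nu> (\<lambda>\<eta>. z ^ (\<eta> ! 0 - wz (\<eta> ! 0)) * ((real L - 1 + z) / L) ^ num_occupied \<eta>)"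
    by (rule stat_cong[OF st]) (rule step_pgf0[OF L])
  finally show ?thesis .
qed



lemma pow_diff_le:
  fixes a b :: real
  assumes "0 \<le> a" "a \<le> 1" "0 \<le> b" "b \<le> 1"
  shows "\<bar>a^k - b^k\<bar> \<le> k * \<bar>a - b\<bar>"
proof (induction k)
  case 0 thus ?case by simp
next
  case (Suc k)
  have "a^Suc k - b^Suc k = a * (a^k - b^k) + b^k * (a - b)" by (simp add: algebra_simps)
  hence "\<bar>a^Suc k - b^Suc k\<bar> \<le> \<bar>a\<bar> * \<bar>a^k - b^k\<bar> + \<bar>b^k\<bar> * \<bar>a - b\<bar>"
    by (metis abs_mult abs_triangle_ineq)
  also have "\<dots> \<le> 1 * (k * \<bar>a - b\<bar>) + 1 * \<bar>a - b\<bar>"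
    using Suc assms by (intro add_mono mult_mono) (auto simp: power_le_one)
  finally show ?case by (simp add: algebra_simps)
qed

lemma exp_approx:
  fixes x :: real assumes "0 \<le> x"
  shows "\<bar>exp (- x) - (1 - x)\<bar> \<le> x^2"
proof -
  have lo: "1 - x \<le> exp (- x)" using exp_ge_add_one_self[of "- x"] by simp
  have "1 + x \<le> exp x" using exp_ge_add_one_self[of x] .
  hence "exp (- x) \<le> 1 / (1 + x)" using assms by (simp add: exp_minus field_simps)
  also have "1 / (1 + x) = (1 - x) + x^2 / (1 + x)" using assms by (simp add: field_simps power2_eq_square)
  also have "x^2 / (1 + x) \<le> x^2"
  proof -
    have "x^2 * 1 \<le> x^2 * (1 + x)" using assms by (intro mult_left_mono) auto
    thus ?thesis using assms by (simp add: divide_le_eq)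
  qed
  finally show ?thesis using lo by simp
qed

lemma exp_lip:
  fixes a b :: real assumes "a \<le> 0" "b \<le> 0"
  shows "\<bar>exp a - exp b\<bar> \<le> \<bar>a - b\<bar>"
proof -
  have main: "exp u - exp v \<le> u - v" if "v \<le> u" "u \<le> 0" for u v :: real
  proof -
    have "exp u - exp v = exp u * (1 - exp (v - u))" by (simp add: algebra_simps exp_diff)
    also have "\<dots> \<le> 1 * (u - v)"
    proof (rule mult_mono)
      show "exp u \<le> 1" using that by simp
      show "1 - exp (v - u) \<le> u - v" using exp_ge_add_one_self[of "v - u"] by linarith
      show "0 \<le> 1 - exp (v - u)" using that by simp
    qed auto
    finally show ?thesis by simp
  qed
  show ?thesis
  proof (cases "b \<le> a")
    case True thus ?thesis using main[of b a] assms by (simp add: abs_le_iff)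
  next
    case False thus ?thesis using main[of a b] assms by (simp add: abs_le_iff)
  qed
qed

lemma filter_nontriv:
  assumes "infinite (Ls :: nat set)"
  shows "at_top \<sqinter> principal Ls \<noteq> bot"
proof
  assume "at_top \<sqinter> principal Ls = bot"
  hence "eventually (\<lambda>_. False) (at_top \<sqinter> principal Ls)" by simp
  then obtain N where "\<forall>n\<ge>N. n \<notin> Ls" by (auto simp: eventually_inf_principal eventually_at_top_linorder)
  hence "Ls \<subseteq> {..<N}" by (auto simp: not_le[symmetric])
  thus False using assms finite_subset by blast
qed

lemma pmf_replicate_Cons:
  "pmf (replicate_pmf (Suc n) p) (x # xs) = pmf p x * pmf (replicate_pmf n p) xs"
proof -
  have "replicate_pmf (Suc n) p = map_pmf (\<lambda>(x, xs). x # xs) (pair_pmf p (replicate_pmf n p))"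
    by (simp add: pair_pmf_def map_bind_pmf)
  moreover have "inj (\<lambda>(x :: 'a, xs). x # xs)" by (auto simp: inj_def)
  ultimately have "pmf (replicate_pmf (Suc n) p) (x # xs) = pmf (pair_pmf p (replicate_pmf n p)) (x, xs)"
    using pmf_map_inj'[of "\<lambda>(x, xs). x # xs" "pair_pmf p (replicate_pmf n p)" "(x, xs)"] by simp
  thus ?thesis by (simp add: pmf_pair)
qed

lemma abs_le_eps: "0 < e \<Longrightarrow> \<bar>x\<bar> \<le> e + x^2 / e" for x e :: real
proof -
  assume e: "0 < e"
  have "0 \<le> (\<bar>x\<bar> - e)^2" by simp
  hence "2 * e * \<bar>x\<bar> \<le> x^2 + e^2" by (simp add: power2_eq_square algebra_simps)
  hence "\<bar>x\<bar> \<le> (x^2 + e^2) / (2 * e)" using e by (simp add: field_simps)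
  also have "\<dots> \<le> e + x^2 / e" using e by (simp add: field_simps power2_eq_square)
  finally show ?thesis .
qed

lemma tendsto_from_sq:
  fixes A V :: "'b \<Rightarrow> real"
  assumes V: "(V \<longlongrightarrow> 0) F" and A: "eventually (\<lambda>x. 0 \<le> A x \<and> (\<forall>e>0. A x \<le> e + V x / e)) F"
  shows "(A \<longlongrightarrow> 0) F"
proof (rule tendstoI)
  fix e :: real assume e: "0 < e"
  have "eventually (\<lambda>x. V x < (e/2) * (e/2)) F" using V e by (intro order_tendstoD(2)) auto
  with A show "eventually (\<lambda>x. dist (A x) 0 < e) F"
  proof eventually_elim
    case (elim x)
    have "A x \<le> e/2 + V x / (e/2)" using elim e by (metis half_gt_zero)
    also have "V x / (e/2) < e/2" using elim e by (simp add: field_simps)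
    finally show ?case using elim by simp
  qed
qed



lemma pgf_pointwise:
  fixes z \<rho> :: real
  assumes z: "0 < z" "z < 1" and L: "0 < L" and K: "K \<le> L" and r0: "0 \<le> \<rho>"
  shows "\<bar>((real L - 1 + z) / L) ^ K - exp (- (1 - z) * \<rho>)\<bar> \<le> 1 / L + \<bar>real K / L - \<rho>\<bar>"
proof -
  define s where "s = 1 - z"
  have s: "0 < s" "s < 1" using z by (auto simp: s_def)
  define x where "x = s / L"
  have x: "0 \<le> x" "x \<le> 1 / L" using s L by (auto simp: x_def divide_right_mono)
  have c: "(real L - 1 + z) / L = 1 - x" using L by (simp add: x_def s_def field_simps)
  have x1: "x \<le> 1" using x L by (simp add: x_def divide_le_eq s)
  have "\<bar>(1 - x) ^ K - exp (- x) ^ K\<bar> \<le> K * \<bar>(1 - x) - exp (- x)\<bar>"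
    using x x1 by (intro pow_diff_le) auto
  also have "\<bar>(1 - x) - exp (- x)\<bar> \<le> x^2" using exp_approx[OF x(1)] by (simp add: abs_minus_commute)
  hence "K * \<bar>(1 - x) - exp (- x)\<bar> \<le> K * x^2" by (intro mult_left_mono) auto
  also have "\<dots> \<le> L * (1 / L)^2"
    using K x by (intro mult_mono power_mono) auto
  also have "\<dots> = 1 / L" using L by (simp add: power2_eq_square)
  finally have t1: "\<bar>(1 - x) ^ K - exp (- x) ^ K\<bar> \<le> 1 / L" .
  have e: "exp (- x) ^ K = exp (- (s * (real K / L)))"
    using exp_of_nat_mult[of K "- x"] by (simp add: x_def field_simps)
  have "\<bar>exp (- (s * (real K / L))) - exp (- s * \<rho>)\<bar> \<le> \<bar>- (s * (real K / L)) - (- s * \<rho>)\<bar>"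
    by (rule exp_lip) (use s r0 in auto)
  also have "\<dots> = s * \<bar>real K / L - \<rho>\<bar>"
  proof -
    have "- (s * (real K / L)) - (- s * \<rho>) = s * (\<rho> - real K / L)" by (simp add: algebra_simps)
    thus ?thesis using s by (simp add: abs_mult abs_minus_commute)
  qed
  also have "\<dots> \<le> \<bar>real K / L - \<rho>\<bar>" using s mult_right_mono[of s 1 "\<bar>real K / L - \<rho>\<bar>"] by simp
  finally have t2: "\<bar>exp (- x) ^ K - exp (- s * \<rho>)\<bar> \<le> \<bar>real K / L - \<rho>\<bar>" unfolding e .
  show ?thesis unfolding c s_def[symmetric] using t1 t2 by linarith
qed

lemma wz_ind: "real (wz n) = 1 - indicator {0} n"
  by (simp add: wz_def indicator_def)

theorem mainTheorem7:
  fixes r :: real and \<nu> :: "nat \<Rightarrow> nat list pmf" and \<mu> :: "nat pmf"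
  defines "Ls \<equiv> {L::nat. 0 < L \<and> (\<exists>N::nat. real N = r * real L)}"
  assumes r_pos: "0 < r"
    and Ls_inf: "infinite Ls"
    and stat: "\<And>L N. L \<in> Ls \<Longrightarrow> real N = r * real L \<Longrightarrow> rbb_stationary L N (\<nu> L)"
    and chaotic: "\<And>n xs. length xs = n \<Longrightarrow>
        ((\<lambda>L. pmf (map_pmf (take n) (\<nu> L)) xs) \<longlongrightarrow> pmf (replicate_pmf n \<mu>) xs)
          (at_top \<sqinter> principal Ls)"
  shows "\<mu> = md1_pi (1 + r - sqrt (1 + r\<^sup>2))"
proof -
  define F where "F = at_top \<sqinter> principal Ls"
  have Fnt: "F \<noteq> bot" unfolding F_def by (rule filter_nontriv[OF Ls_inf])
  have evL: "eventually (\<lambda>L. L \<in> Ls \<and> 2 \<le> L) F"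
    unfolding F_def eventually_inf_principal
    using eventually_ge_at_top[of "2::nat"] by eventually_elim auto
  define NN where "NN L = (SOME N::nat. real N = r * real L)" for L
  have NN: "real (NN L) = r * real L" if "L \<in> Ls" for L
  proof -
    from that obtain N :: nat where "real N = r * real L" by (auto simp: Ls_def)
    thus ?thesis unfolding NN_def by (rule someI)
  qed
  have st: "rbb_stationary L (NN L) (\<nu> L)" if "L \<in> Ls" for L
    using stat[OF that NN[OF that]] .
  have invL: "((\<lambda>L. 1 / real L) \<longlongrightarrow> 0) F"
    unfolding F_def by (rule tendsto_mono[OF inf_le1]) (rule lim_inverse_n')
  have chaos: "\<And>n xs. length xs = n \<Longrightarrow>
        ((\<lambda>L. pmf (map_pmf (take n) (\<nu> L)) xs) \<longlongrightarrow> pmf (replicate_pmf n \<mu>) xs) F"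
    unfolding F_def by (rule chaotic)
  have len: "length \<eta> = L" if "L \<in> Ls" "\<eta> \<in> set_pmf (\<nu> L)" for L \<eta>
    using st[OF that(1)] that(2) by (auto simp: rbb_stationary_def rbb_configs_def)

  define P0 where "P0 L = map_pmf (\<lambda>\<eta>. \<eta> ! 0) (\<nu> L)" for L
  have P0conv: "((\<lambda>L. pmf (P0 L) a) \<longlongrightarrow> pmf \<mu> a) F" for a
  proof -
    have "((\<lambda>L. pmf (map_pmf (take 1) (\<nu> L)) [a]) \<longlongrightarrow> pmf (replicate_pmf 1 \<mu>) [a]) F"
      by (rule chaos) simp
    moreover have "pmf (replicate_pmf 1 \<mu>) [a] = pmf \<mu> a"
      using pmf_replicate_Cons[of 0 \<mu> a "[]"] by simp
    moreover have ev: "eventually (\<lambda>L. pmf (map_pmf (take 1) (\<nu> L)) [a] = pmf (P0 L) a) F"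
      using evL
    proof eventually_elim
      case (elim L)
      have "map_pmf (take 1) (\<nu> L) = map_pmf (\<lambda>x. [x]) (P0 L)"
        unfolding P0_def pmf.map_comp
        by (rule map_pmf_cong[OF refl]) (use len[of L] elim in \<open>auto simp: take_Suc_conv_app_nth\<close>)
      moreover have "pmf (map_pmf (\<lambda>x. [x]) (P0 L)) [a] = pmf (P0 L) a"
        by (rule pmf_map_inj') (auto simp: inj_def)
      ultimately show ?case by simp
    qed
    ultimately show ?thesis unfolding tendsto_cong[OF ev] by simp
  qed
  have W: "((\<lambda>L. measure_pmf.expectation (\<nu> L) (\<lambda>\<eta>. f (\<eta> ! 0))) \<longlongrightarrow> measure_pmf.expectation \<mu> f) F"
    if "\<And>a. \<bar>f a\<bar> \<le> B" for f :: "nat \<Rightarrow> real" and B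
    using pmf_conv_expectation[OF P0conv that] by (simp add: P0_def)

  define p where "p L = measure_pmf.expectation (\<nu> L) (\<lambda>\<eta>. real (wz (\<eta> ! 0)))" for L
  define q where "q L = measure_pmf.expectation (\<nu> L) (\<lambda>\<eta>. real (wz (\<eta> ! 0)) * real (wz (\<eta> ! 1)))" for L
  define z0 where "z0 L = measure_pmf.expectation (\<nu> L) (\<lambda>\<eta>. indicator {0} (\<eta> ! 0) :: real)" for L
  define z00 where "z00 L = measure_pmf.expectation (\<nu> L) (\<lambda>\<eta>. indicator {0} (\<eta> ! 0) * indicator {0} (\<eta> ! 1) :: real)" for L
  define \<rho> where "\<rho> = 1 - pmf \<mu> 0"
  have z0_lim: "(z0 \<longlongrightarrow> pmf \<mu> 0) F"
  proof -
    have "(z0 \<longlongrightarrow> measure_pmf.expectation \<mu> (\<lambda>n. indicator {0} n :: real)) F"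
      unfolding z0_def by (rule W[where B=1]) (auto split: split_indicator)
    thus ?thesis by (simp add: measure_pmf_single)
  qed
  have p_eq: "eventually (\<lambda>L. p L = 1 - z0 L) F"
    using evL
  proof eventually_elim
    case (elim L)
    have "p L = measure_pmf.expectation (\<nu> L) (\<lambda>\<eta>. 1 - indicator {0} (\<eta> ! 0) :: real)"
      unfolding p_def wz_ind ..
    also have "\<dots> = 1 - z0 L" unfolding z0_def
      by (subst Bochner_Integration.integral_diff) (auto intro: stat_int[OF st[OF conjunct1[OF elim]]])
    finally show ?case .
  qed
  have p_lim: "(p \<longlongrightarrow> \<rho>) F"
  proof -
    have "((\<lambda>L. 1 - z0 L) \<longlongrightarrow> \<rho>) F" unfolding \<rho>_def by (intro tendsto_diff tendsto_const z0_lim)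
    thus ?thesis using tendsto_cong[OF p_eq] by simp
  qed
  have z00_lim: "(z00 \<longlongrightarrow> pmf \<mu> 0 * pmf \<mu> 0) F"
  proof -
    have lim: "((\<lambda>L. pmf (map_pmf (take 2) (\<nu> L)) [0, 0]) \<longlongrightarrow> pmf (replicate_pmf 2 \<mu>) [0, 0]) F"
      by (rule chaos) simp
    have r2: "pmf (replicate_pmf 2 \<mu>) [0, 0] = pmf \<mu> 0 * pmf \<mu> 0"
      using pmf_replicate_Cons[of 1 \<mu> 0 "[0]"] pmf_replicate_Cons[of 0 \<mu> 0 "[]"]
      by (simp add: numeral_2_eq_2)
    have ev: "eventually (\<lambda>L. pmf (map_pmf (take 2) (\<nu> L)) [0, 0] = z00 L) F"
      using evL
    proof eventually_elim
      case (elim L)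
      have "pmf (map_pmf (take 2) (\<nu> L)) [0, 0] = measure_pmf.expectation (\<nu> L) (indicator (take 2 -` {[0, 0]}))"
        by (simp add: pmf_map)
      also have "\<dots> = z00 L" unfolding z00_def
      proof (rule integral_cong_AE)
        show "AE \<eta> in measure_pmf (\<nu> L). indicator (take 2 -` {[0, 0]}) \<eta> = (indicator {0} (\<eta> ! 0) * indicator {0} (\<eta> ! 1) :: real)"
          unfolding AE_measure_pmf_iff
        proof
          fix \<eta> assume "\<eta> \<in> set_pmf (\<nu> L)"
          hence "length \<eta> = L" using len elim by auto
          hence "take 2 \<eta> = [\<eta> ! 0, \<eta> ! 1]" using elim
            by (cases \<eta>; cases "tl \<eta>") (auto simp: numeral_2_eq_2)
          thus "indicator (take 2 -` {[0, 0]}) \<eta> = (indicator {0} (\<eta> ! 0) * indicator {0} (\<eta> ! 1) :: real)"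
            by (auto simp: indicator_def)
        qed
      qed auto
      finally show ?case .
    qed
    show ?thesis using lim unfolding tendsto_cong[OF ev] r2 .
  qed
  have q_eq: "eventually (\<lambda>L. q L = 1 - 2 * z0 L + z00 L) F"
    using evL
  proof eventually_elim
    case (elim L)
    have L0: "0 < L" using elim by auto
    note S = st[OF conjunct1[OF elim]]
    have e1: "measure_pmf.expectation (\<nu> L) (\<lambda>\<eta>. indicator {0} (\<eta> ! 1) :: real) = z0 L"
      unfolding z0_def using exch1[OF L0 S, of 1 "\<lambda>n. indicator {0} n"] elim by simp
    have "q L = measure_pmf.expectation (\<nu> L) (\<lambda>\<eta>. 1 - indicator {0} (\<eta> ! 0) - indicator {0} (\<eta> ! 1)
                 + indicator {0} (\<eta> ! 0) * indicator {0} (\<eta> ! 1) :: real)"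
      unfolding q_def wz_ind by (simp add: algebra_simps)
    also have "\<dots> = 1 - z0 L - z0 L + z00 L"
      using e1 by (simp add: stat_int[OF S] z0_def z00_def)
    finally show ?case by simp
  qed
  have q_lim: "(q \<longlongrightarrow> \<rho> * \<rho>) F"
  proof -
    have "((\<lambda>L. 1 - 2 * z0 L + z00 L) \<longlongrightarrow> 1 - 2 * pmf \<mu> 0 + pmf \<mu> 0 * pmf \<mu> 0) F"
      by (intro tendsto_intros z0_lim z00_lim)
    moreover have "1 - 2 * pmf \<mu> 0 + pmf \<mu> 0 * pmf \<mu> 0 = \<rho> * \<rho>" by (simp add: \<rho>_def algebra_simps)
    ultimately show ?thesis using tendsto_cong[OF q_eq] by simp
  qed

  \<comment> \<open>the second moment identity\<close>
  define EK where "EK L = measure_pmf.expectation (\<nu> L) (\<lambda>\<eta>. real (num_occupied \<eta>))" for L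
  define EK2 where "EK2 L = measure_pmf.expectation (\<nu> L) (\<lambda>\<eta>. (real (num_occupied \<eta>))^2)" for L
  have EKs: "eventually (\<lambda>L. EK L = L * p L \<and> EK2 L = L * p L + real L * (real L - 1) * q L) F"
    using evL
  proof eventually_elim
    case (elim L)
    note S = st[OF conjunct1[OF elim]]
    show ?case using EK[of L, OF _ S] EK2[of L, OF _ S] elim by (simp add: EK_def EK2_def p_def q_def)
  qed
  define Mx where "Mx L = - 2 * r + 2 * p L + 2 * r * p L - 2 * p L * (1 / real L) - (1 - 1 / real L) * q L" for L
  have Mx0: "eventually (\<lambda>L. Mx L = 0) F"
    using evL EKs
  proof eventually_elim
    case (elim L)
    note S = st[OF conjunct1[OF elim(1)]]
    have L0: "0 < L" using elim by auto
    have "0 = - 2 * real (NN L) + 2 * EK L + 2 * real (NN L) * EK L / L - EK2 L / L - EK L / L"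
      using moment_identity[OF L0 S] by (simp add: EK_def EK2_def)
    also have "\<dots> = L * Mx L"
      unfolding conjunct1[OF elim(2)] conjunct2[OF elim(2)] NN[OF conjunct1[OF elim(1)]]
      using L0 by (simp add: Mx_def field_simps)
    finally show ?case using L0 by simp
  qed
  have Mx_lim: "(Mx \<longlongrightarrow> - 2 * r + 2 * \<rho> + 2 * r * \<rho> - 2 * \<rho> * 0 - (1 - 0) * (\<rho> * \<rho>)) F"
    unfolding Mx_def by (intro tendsto_intros p_lim q_lim invL)
  have quad: "- 2 * r + 2 * \<rho> + 2 * r * \<rho> - \<rho> * \<rho> = 0"
  proof -
    have "(Mx \<longlongrightarrow> 0) F" using tendsto_cong[OF Mx0] by simp
    from tendsto_unique[OF Fnt Mx_lim this] show ?thesis by simp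
  qed
  have \<rho>01: "0 \<le> \<rho>" "\<rho> \<le> 1" by (auto simp: \<rho>_def pmf_le_1)
  have \<rho>_val: "\<rho> = 1 + r - sqrt (1 + r\<^sup>2)"
  proof -
    have "(1 + r - \<rho>)^2 = 1 + r^2" using quad by (simp add: power2_eq_square algebra_simps)
    hence "sqrt (1 + r^2) = 1 + r - \<rho>" using \<rho>01 r_pos by (intro real_sqrt_unique) auto
    thus ?thesis by simp
  qed
  have \<rho>1: "\<rho> < 1"
  proof -
    have "sqrt (r^2) < sqrt (1 + r^2)" by (intro real_sqrt_less_mono) simp
    thus ?thesis using r_pos \<rho>_val by simp
  qed

  \<comment> \<open>concentration of K / L\<close>
  define A where "A L = measure_pmf.expectation (\<nu> L) (\<lambda>\<eta>. \<bar>real (num_occupied \<eta>) / L - \<rho>\<bar>)" for L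
  define V where "V L = measure_pmf.expectation (\<nu> L) (\<lambda>\<eta>. (real (num_occupied \<eta>) / L - \<rho>)^2)" for L
  have V_eq: "eventually (\<lambda>L. V L = (p L * (1 / real L) + (1 - 1 / real L) * q L) - 2 * \<rho> * p L + \<rho> * \<rho>) F"
    using evL EKs
  proof eventually_elim
    case (elim L)
    note S = st[OF conjunct1[OF elim(1)]]
    have L0: "0 < L" using elim by auto
    have "V L = measure_pmf.expectation (\<nu> L) (\<lambda>\<eta>. (real (num_occupied \<eta>))^2 / (real L * real L)
                 - 2 * \<rho> * (real (num_occupied \<eta>) / real L) + \<rho> * \<rho>)"
      unfolding V_def using L0
      by (intro Bochner_Integration.integral_cong refl) (simp add: power2_eq_square field_simps)
    also have "\<dots> = EK2 L / (real L * real L) - 2 * \<rho> * (EK L / real L) + \<rho> * \<rho>"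
      by (simp add: stat_int[OF S] EK_def EK2_def)
    also have "\<dots> = (p L * (1 / real L) + (1 - 1 / real L) * q L) - 2 * \<rho> * p L + \<rho> * \<rho>"
      unfolding conjunct1[OF elim(2)] conjunct2[OF elim(2)] using L0 by (simp add: field_simps)
    finally show ?case .
  qed
  have V_lim: "(V \<longlongrightarrow> 0) F"
  proof -
    have "((\<lambda>L. (p L * (1 / real L) + (1 - 1 / real L) * q L) - 2 * \<rho> * p L + \<rho> * \<rho>) \<longlongrightarrow>
          (\<rho> * 0 + (1 - 0) * (\<rho> * \<rho>)) - 2 * \<rho> * \<rho> + \<rho> * \<rho>) F"
      by (intro tendsto_intros p_lim q_lim invL)
    thus ?thesis using tendsto_cong[OF V_eq] by simp
  qed
  have A_lim: "(A \<longlongrightarrow> 0) F"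
  proof (rule tendsto_from_sq[OF V_lim])
    show "eventually (\<lambda>L. 0 \<le> A L \<and> (\<forall>e>0. A L \<le> e + V L / e)) F"
      using evL
    proof eventually_elim
      case (elim L)
      note S = st[OF conjunct1[OF elim]]
      have "A L \<le> e + V L / e" if e: "0 < e" for e
      proof -
        have "A L \<le> measure_pmf.expectation (\<nu> L) (\<lambda>\<eta>. e + (real (num_occupied \<eta>) / L - \<rho>)^2 / e)"
          unfolding A_def by (rule integral_mono) (auto intro: stat_int[OF S] abs_le_eps[OF e])
        also have "\<dots> = e + V L / e" by (simp add: stat_int[OF S] V_def)
        finally show ?thesis .
      qed
      moreover have "0 \<le> A L" unfolding A_def by (rule integral_nonneg_AE) auto
      ultimately show ?case by auto
    qed
  qed

  \<comment> \<open>generating function identity in the limit\<close>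
  have pgf_eq: "measure_pmf.expectation (bind_pmf \<mu> (md1_step \<rho>)) (\<lambda>n. z^n) = measure_pmf.expectation \<mu> (\<lambda>n. z^n)"
    if z: "0 < z" "z < 1" for z :: real
  proof -
    define h where "h n = z ^ (n - wz n)" for n
    define E0 where "E0 = exp (- (1 - z) * \<rho>)"
    define G where "G L = measure_pmf.expectation (\<nu> L) (\<lambda>\<eta>. z ^ (\<eta> ! 0))" for L
    define Hn where "Hn L = measure_pmf.expectation (\<nu> L) (\<lambda>\<eta>. h (\<eta> ! 0))" for L
    define R where "R L = measure_pmf.expectation (\<nu> L) (\<lambda>\<eta>. h (\<eta> ! 0) * ((real L - 1 + z) / L) ^ num_occupied \<eta>)" for L
    have hb: "\<bar>h n\<bar> \<le> 1" "0 \<le> h n" for n using z by (auto simp: h_def power_le_one)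
    have G_lim: "(G \<longlongrightarrow> measure_pmf.expectation \<mu> (\<lambda>n. z^n)) F"
      unfolding G_def by (rule W[where B=1]) (use z in \<open>auto simp: power_le_one\<close>)
    have H_lim: "(Hn \<longlongrightarrow> measure_pmf.expectation \<mu> h) F"
      unfolding Hn_def by (rule W[where B=1]) (rule hb)
    have GR: "eventually (\<lambda>L. G L = R L) F"
      using evL
    proof eventually_elim
      case (elim L)
      have L0: "0 < L" using elim by auto
      show ?case unfolding G_def R_def h_def by (rule pgf_identity[OF L0 st[OF conjunct1[OF elim]]])
    qed
    have D: "eventually (\<lambda>L. norm (R L - Hn L * E0) \<le> 1 / real L + A L) F"
      using evL
    proof eventually_elim
      case (elim L)
      note S = st[OF conjunct1[OF elim]]
      have L0: "0 < L" using elim by auto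
      have "R L - Hn L * E0 = measure_pmf.expectation (\<nu> L) (\<lambda>\<eta>. h (\<eta> ! 0) * (((real L - 1 + z) / L) ^ num_occupied \<eta> - E0))"
        by (simp add: R_def Hn_def stat_int[OF S] right_diff_distrib)
      also have "\<bar>\<dots>\<bar> \<le> measure_pmf.expectation (\<nu> L) (\<lambda>\<eta>. 1 / real L + \<bar>real (num_occupied \<eta>) / L - \<rho>\<bar>)"
      proof -
        have "\<bar>measure_pmf.expectation (\<nu> L) (\<lambda>\<eta>. h (\<eta> ! 0) * (((real L - 1 + z) / L) ^ num_occupied \<eta> - E0))\<bar>
              \<le> measure_pmf.expectation (\<nu> L) (\<lambda>\<eta>. \<bar>h (\<eta> ! 0) * (((real L - 1 + z) / L) ^ num_occupied \<eta> - E0)\<bar>)"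
          using integral_norm_bound[of "measure_pmf (\<nu> L)" "\<lambda>\<eta>. h (\<eta> ! 0) * (((real L - 1 + z) / L) ^ num_occupied \<eta> - E0)"]
          by simp
        also have "\<dots> \<le> measure_pmf.expectation (\<nu> L) (\<lambda>\<eta>. 1 / real L + \<bar>real (num_occupied \<eta>) / L - \<rho>\<bar>)"
        proof (rule integral_mono_AE)
          show "AE \<eta> in measure_pmf (\<nu> L). \<bar>h (\<eta> ! 0) * (((real L - 1 + z) / L) ^ num_occupied \<eta> - E0)\<bar>
                 \<le> 1 / real L + \<bar>real (num_occupied \<eta>) / L - \<rho>\<bar>"
            unfolding AE_measure_pmf_iff
          proof
            fix \<eta> assume "\<eta> \<in> set_pmf (\<nu> L)"
            hence "length \<eta> = L" using len elim by auto
            hence K: "num_occupied \<eta> \<le> L" using num_occupied_le_length[of \<eta>] by simp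
            have "\<bar>h (\<eta> ! 0) * (((real L - 1 + z) / L) ^ num_occupied \<eta> - E0)\<bar>
                  \<le> 1 * \<bar>((real L - 1 + z) / L) ^ num_occupied \<eta> - E0\<bar>"
              unfolding abs_mult using hb[of "\<eta> ! 0"] by (intro mult_right_mono) auto
            also have "\<dots> \<le> 1 / real L + \<bar>real (num_occupied \<eta>) / L - \<rho>\<bar>"
              unfolding E0_def using pgf_pointwise[OF z L0 K \<rho>01(1)] by simp
            finally show "\<bar>h (\<eta> ! 0) * (((real L - 1 + z) / L) ^ num_occupied \<eta> - E0)\<bar>
                 \<le> 1 / real L + \<bar>real (num_occupied \<eta>) / L - \<rho>\<bar>" .
          qed
        qed (auto intro: stat_int[OF S])
        finally show ?thesis .
      qed
      also have "\<dots> = 1 / real L + A L" by (simp add: stat_int[OF S] A_def)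
      finally show ?case by simp
    qed
    have "((\<lambda>L. R L - Hn L * E0) \<longlongrightarrow> 0) F"
    proof (rule Lim_null_comparison[OF D])
      show "((\<lambda>L. 1 / real L + A L) \<longlongrightarrow> 0) F" using tendsto_add[OF invL A_lim] by simp
    qed
    hence "((\<lambda>L. (R L - Hn L * E0) + Hn L * E0) \<longlongrightarrow> 0 + measure_pmf.expectation \<mu> h * E0) F"
      by (intro tendsto_intros H_lim)
    hence "(R \<longlongrightarrow> measure_pmf.expectation \<mu> h * E0) F" by simp
    hence "(G \<longlongrightarrow> measure_pmf.expectation \<mu> h * E0) F" using tendsto_cong[OF GR] by simp
    hence eq: "measure_pmf.expectation \<mu> (\<lambda>n. z^n) = measure_pmf.expectation \<mu> h * E0"
      using tendsto_unique[OF Fnt G_lim] by simp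
    have "measure_pmf.expectation (bind_pmf \<mu> (md1_step \<rho>)) (\<lambda>n. z^n) = measure_pmf.expectation \<mu> h * exp (\<rho> * (z - 1))"
      unfolding h_def[abs_def] by (rule md1_bind_pgf) (use \<rho>01 z in auto)
    also have "exp (\<rho> * (z - 1)) = E0" unfolding E0_def by (simp add: algebra_simps)
    finally show ?thesis using eq by simp
  qed
  have inv: "md1_invariant \<rho> \<mu>"
    unfolding md1_invariant_def by (rule pmf_eq_pgf) (rule pgf_eq)
  have "md1_pi \<rho> = \<mu>"
    unfolding md1_pi_def
  proof (rule the_equality)
    show "md1_invariant \<rho> \<mu>" by (rule inv)
    fix p' assume "md1_invariant \<rho> p'"
    thus "p' = \<mu>" using md1_invariant_unique[OF _ inv \<rho>01(1) \<rho>1] by blast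
  qed
  thus ?thesis using \<rho>_val by simp
qed



end
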